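(* Let $Z$ be a hyperimmune set. Then there is a $1$-generic set $G\leq_T Z\oplus 0'$ such that $Z\subseteq G$.
   Context: An infinite set $Z$ is hyperimmune if for every computable increasing function $f$ there is an $n$ such that $[f(n),f(n+1))\cap Z=\emptyset$. A set $G$ (identified with its characteristic sequence in $2^\omega$) is $1$-generic if for every c.e. set $S$ of finite binary strings, either some initial segment of $G$ lies in $S$, or some initial segment of $G$ has no extension in $S$. *)

theory Defs
  imports Main "HOL-Library.Nat_Bijection"
begin

datatype rf = Zero | Succ | Proj nat | Comp rf "rf list" | PrimRec rf rf | Mu rf | Query

definition arg0 :: "nat list \<Rightarrow> nat" where
  "arg0 xs = (if xs = [] then 0 else hd xs)"

inductive eval :: "nat set \<Rightarrow> rf \<Rightarrow> nat list \<Rightarrow> nat \<Rightarrow> bool" for A :: "nat set" where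
  zero: "eval A Zero xs 0"
| succ: "eval A Succ xs (Suc (arg0 xs))"
| proj: "eval A (Proj i) xs (if i < length xs then xs ! i else 0)"
| query: "eval A Query xs (if arg0 xs \<in> A then 1 else 0)"
| comp: "list_all2 (\<lambda>g y. eval A g xs y) gs ys \<Longrightarrow> eval A f ys z \<Longrightarrow> eval A (Comp f gs) xs z"
| prec0: "eval A f xs y \<Longrightarrow> eval A (PrimRec f g) (0 # xs) y"
| precS: "eval A (PrimRec f g) (n # xs) r \<Longrightarrow> eval A g (n # r # xs) y
           \<Longrightarrow> eval A (PrimRec f g) (Suc n # xs) y"
| mu: "eval A f (n # xs) 0 \<Longrightarrow> (\<forall>m<n. \<exists>y. y \<noteq> 0 \<and> eval A f (m # xs) y)
           \<Longrightarrow> eval A (Mu f) xs n"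

definition computable_in :: "nat set \<Rightarrow> (nat \<Rightarrow> nat) \<Rightarrow> bool" where
  "computable_in A f \<longleftrightarrow> (\<exists>p. \<forall>n. eval A p [n] (f n))"

definition computable :: "(nat \<Rightarrow> nat) \<Rightarrow> bool" where
  "computable f \<longleftrightarrow> computable_in {} f"

definition turing_le :: "nat set \<Rightarrow> nat set \<Rightarrow> bool" where
  "turing_le X A \<longleftrightarrow> (\<exists>p. \<forall>n. eval A p [n] (if n \<in> X then 1 else 0))"

fun rf_num :: "rf \<Rightarrow> nat" where
  "rf_num Zero = prod_encode (0, 0)"
| "rf_num Succ = prod_encode (1, 0)"
| "rf_num (Proj i) = prod_encode (2, i)"
| "rf_num (Comp f gs) = prod_encode (3, prod_encode (rf_num f, list_encode (map rf_num gs)))"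
| "rf_num (PrimRec f g) = prod_encode (4, prod_encode (rf_num f, rf_num g))"
| "rf_num (Mu f) = prod_encode (5, rf_num f)"
| "rf_num Query = prod_encode (6, 0)"

definition halting_set :: "nat set" where
  "halting_set = {e. \<exists>p. rf_num p = e \<and> (\<exists>y. eval {} p [e] y)}"

definition join :: "nat set \<Rightarrow> nat set \<Rightarrow> nat set" where
  "join X Y = {2 * n | n. n \<in> X} \<union> {2 * n + 1 | n. n \<in> Y}"

definition hyperimmune :: "nat set \<Rightarrow> bool" where
  "hyperimmune Z \<longleftrightarrow> infinite Z \<and>
     (\<forall>f. computable f \<and> strict_mono f \<longrightarrow> (\<exists>n. {f n..<f (Suc n)} \<inter> Z = {}))"

definition str_code :: "bool list \<Rightarrow> nat" where
  "str_code \<sigma> = list_encode (map (\<lambda>b. if b then 1 else 0) \<sigma>)"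

definition ce_strings :: "bool list set \<Rightarrow> bool" where
  "ce_strings S \<longleftrightarrow> (\<exists>p. \<forall>\<sigma>. \<sigma> \<in> S \<longleftrightarrow> (\<exists>y. eval {} p [str_code \<sigma>] y))"

definition init_seg :: "nat set \<Rightarrow> nat \<Rightarrow> bool list" where
  "init_seg G n = map (\<lambda>i. i \<in> G) [0..<n]"

definition one_generic :: "nat set \<Rightarrow> bool" where
  "one_generic G \<longleftrightarrow> (\<forall>S. ce_strings S \<longrightarrow>
      (\<exists>n. init_seg G n \<in> S) \<or> (\<exists>n. \<forall>\<tau>\<in>S. \<not> (\<exists>\<rho>. \<tau> = init_seg G n @ \<rho>)))"

end

theory Submission
  imports Defs
begin


inductive_cases evalZeroE: "eval A Zero xs y"
inductive_cases evalSuccE: "eval A Succ xs y"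
inductive_cases evalProjE: "eval A (Proj i) xs y"
inductive_cases evalQueryE: "eval A Query xs y"
inductive_cases evalCompE: "eval A (Comp f gs) xs y"
inductive_cases evalPrecE: "eval A (PrimRec f g) xs y"
inductive_cases evalMuE: "eval A (Mu f) xs y"

lemma eval_det: "eval A p xs y \<Longrightarrow> eval A p xs y' \<Longrightarrow> y = y'"
proof (induction arbitrary: y' rule: eval.induct)
  case (zero xs) then show ?case by (rule evalZeroE) simp
next
  case (succ xs) then show ?case by (rule evalSuccE) simp
next
  case (proj i xs) then show ?case by (rule evalProjE) simp
next
  case (query xs) then show ?case by (rule evalQueryE) simp
next
  case (comp xs gs ys f z)
  from comp.prems obtain ys' where l: "list_all2 (\<lambda>g y. eval A g xs y) gs ys'" and e: "eval A f ys' y'"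
    by (rule evalCompE) blast
  have "ys = ys'" using comp.IH(1) l
  proof (induction gs arbitrary: ys ys')
    case Nil then show ?case by simp
  next
    case (Cons g gs)
    from Cons.prems(1) obtain y ys0 where a: "ys = y # ys0" "eval A g xs y \<and> (\<forall>y'. eval A g xs y' \<longrightarrow> y = y')"
       "list_all2 (\<lambda>g y. eval A g xs y \<and> (\<forall>y'. eval A g xs y' \<longrightarrow> y = y')) gs ys0"
      by (auto simp: list_all2_Cons1)
    from Cons.prems(2) obtain y' ys0' where b: "ys' = y' # ys0'" "eval A g xs y'"
       "list_all2 (\<lambda>g y. eval A g xs y) gs ys0'"
      by (auto simp: list_all2_Cons1)
    from a b Cons.IH[OF a(3) b(3)] show ?case by simp
  qed
  with comp.IH(2) e show ?case by simp
next
  case (prec0 f xs y g)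
  from prec0.prems show ?case
    by (rule evalPrecE) (use prec0.IH in simp_all)
next
  case (precS f g n xs r y)
  from precS.prems obtain r' where "eval A (PrimRec f g) (n # xs) r'" "eval A g (n # r' # xs) y'"
    by (rule evalPrecE) auto
  with precS.IH show ?case by simp
next
  case (mu f n xs)
  from mu.prems have ab: "eval A f (y' # xs) 0 \<and> (\<forall>m<y'. \<exists>y. y \<noteq> 0 \<and> eval A f (m # xs) y)"
    by (rule evalMuE) blast
  note a = ab[THEN conjunct1] and b = ab[THEN conjunct2]
  show ?case
  proof (rule linorder_cases[of n y'])
    assume "n < y'"
    with b obtain y where "y \<noteq> 0" "eval A f (n # xs) y" by blast
    with mu.IH(1) show ?case by simp
  next
    assume "y' < n"
    with mu.IH(2) obtain y where "y \<noteq> 0" "\<forall>z. eval A f (y' # xs) z \<longrightarrow> y = z" by blast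
    with a show ?case by simp
  qed simp
qed

section \<open>Computable functions of fixed arity\<close>

definition rc :: "nat set \<Rightarrow> nat \<Rightarrow> (nat list \<Rightarrow> nat) \<Rightarrow> bool" where
  "rc A n F \<longleftrightarrow> (\<exists>p. \<forall>xs. length xs = n \<longrightarrow> eval A p xs (F xs))"


named_theorems rci

lemma rc_cong: "rc A n F \<Longrightarrow> (\<And>xs. length xs = n \<Longrightarrow> F xs = G xs) \<Longrightarrow> rc A n G"
  unfolding rc_def by metis

fun kprog :: "nat \<Rightarrow> rf" where
  "kprog 0 = Zero"
| "kprog (Suc c) = Comp Succ [kprog c]"

lemma eval_kprog: "eval A (kprog c) xs c"
proof (induction c)
  case 0 then show ?case by (auto intro: eval.zero)
next
  case (Suc c)
  have "eval A Succ [c] (Suc (arg0 [c]))" by (rule eval.succ)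
  then have "eval A Succ [c] (Suc c)" by (simp add: arg0_def)
  with Suc show ?case by (auto intro!: eval.comp[where ys="[c]"])
qed

lemma rc_const[rci]: "rc A n (\<lambda>xs. c)"
  unfolding rc_def using eval_kprog by blast

lemma rc_proj[rci]: "i < n \<Longrightarrow> rc A n (\<lambda>xs. xs ! i)"
  unfolding rc_def
  apply (rule exI[of _ "Proj i"])
  using eval.proj[of A i] by (metis)

lemma progs_exist:
  assumes "\<forall>G\<in>set Gs. rc A n G"
  shows "\<exists>ps. list_all2 (\<lambda>p G. \<forall>xs. length xs = n \<longrightarrow> eval A p xs (G xs)) ps Gs"
  using assms
proof (induction Gs)
  case Nil then show ?case by auto
next
  case (Cons G Gs)
  then obtain ps where "list_all2 (\<lambda>p G. \<forall>xs. length xs = n \<longrightarrow> eval A p xs (G xs)) ps Gs" by auto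
  moreover from Cons obtain p where "\<forall>xs. length xs = n \<longrightarrow> eval A p xs (G xs)" by (auto simp: rc_def)
  ultimately show ?case by (auto intro!: exI[of _ "p # ps"])
qed

lemma rc_compL:
  assumes "rc A m F" "length Gs = m" "\<forall>G\<in>set Gs. rc A n G"
  shows "rc A n (\<lambda>xs. F (map (\<lambda>G. G xs) Gs))"
proof -
  obtain pf where pf: "\<forall>ys. length ys = m \<longrightarrow> eval A pf ys (F ys)" using assms(1) by (auto simp: rc_def)
  obtain ps where ps: "list_all2 (\<lambda>p G. \<forall>xs. length xs = n \<longrightarrow> eval A p xs (G xs)) ps Gs"
    using progs_exist[OF assms(3)] by auto
  show ?thesis unfolding rc_def
  proof (intro exI allI impI)
    fix xs :: "nat list" assume l: "length xs = n"
    have "list_all2 (\<lambda>g y. eval A g xs y) ps (map (\<lambda>G. G xs) Gs)"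
      using ps l by (auto simp: list_all2_map2 elim: list_all2_mono)
    moreover have "eval A pf (map (\<lambda>G. G xs) Gs) (F (map (\<lambda>G. G xs) Gs))"
      using pf assms(2) by auto
    ultimately show "eval A (Comp pf ps) xs (F (map (\<lambda>G. G xs) Gs))" by (rule eval.comp)
  qed
qed

lemma rc_app1: "rc A 1 (\<lambda>ys. F (ys ! 0)) \<Longrightarrow> rc A n a \<Longrightarrow> rc A n (\<lambda>xs. F (a xs))"
  using rc_compL[of A 1 "\<lambda>ys. F (ys ! 0)" "[a]" n] by auto

lemma rc_app2: "rc A 2 (\<lambda>ys. F (ys ! 0) (ys ! 1)) \<Longrightarrow> rc A n a \<Longrightarrow> rc A n b \<Longrightarrow> rc A n (\<lambda>xs. F (a xs) (b xs))"
  using rc_compL[of A 2 "\<lambda>ys. F (ys ! 0) (ys ! 1)" "[a, b]" n] by auto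

lemma rc_app3: "rc A 3 (\<lambda>ys. F (ys ! 0) (ys ! 1) (ys ! 2)) \<Longrightarrow> rc A n a \<Longrightarrow> rc A n b \<Longrightarrow> rc A n c
   \<Longrightarrow> rc A n (\<lambda>xs. F (a xs) (b xs) (c xs))"
  using rc_compL[of A 3 "\<lambda>ys. F (ys ! 0) (ys ! 1) (ys ! 2)" "[a, b, c]" n] by (auto simp: numeral_3_eq_3)

lemma rc_cons_arg:
  assumes "rc A (Suc m) F" "rc A n a" "\<forall>G\<in>set Gs. rc A n G" "length Gs = m"
  shows "rc A n (\<lambda>xs. F (a xs # map (\<lambda>G. G xs) Gs))"
  using rc_compL[of A "Suc m" F "a # Gs" n] assms by auto

lemma rc_tl_arg[rci]: "rc A n G \<Longrightarrow> rc A (Suc n) (\<lambda>ws. G (tl ws))"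
proof -
  assume "rc A n G"
  have "rc A (Suc n) (\<lambda>ws. G (map (\<lambda>H. H ws) (map (\<lambda>i ws. ws ! Suc i) [0..<n])))"
    by (rule rc_compL) (use \<open>rc A n G\<close> in \<open>auto intro: rc_proj\<close>)
  moreover have "map (\<lambda>i. xs ! Suc i) [0..<n] = tl xs" if "length xs = Suc n" for xs :: "nat list"
    by (rule nth_equalityI) (use that in \<open>auto simp: nth_tl\<close>)
  ultimately show ?thesis
    by (elim rc_cong) (simp add: comp_def)
qed

lemma rc_hd[rci]: "rc A (Suc n) (\<lambda>ws. hd ws)"
  by (rule rc_cong[OF rc_proj[of 0]]) (simp, case_tac xs, auto)

lemma rc_tl_nth[rci]: "i < n \<Longrightarrow> rc A (Suc n) (\<lambda>ws. tl ws ! i)"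
  by (rule rc_cong[OF rc_proj[of "Suc i"]]) (auto simp: nth_tl)

lemma rc_succ[rci]: "rc A n a \<Longrightarrow> rc A n (\<lambda>xs. Suc (a xs))"
proof -
  have "rc A 1 (\<lambda>ys. Suc (ys ! 0))"
    unfolding rc_def
    apply (rule exI[of _ Succ])
    using eval.succ[of A] by (metis arg0_def hd_conv_nth length_0_conv zero_neq_one)
  then show "rc A n a \<Longrightarrow> rc A n (\<lambda>xs. Suc (a xs))" by (rule rc_app1)
qed

lemma rc_prec:
  assumes "rc A n f" "rc A (Suc (Suc n)) g"
  shows "rc A (Suc n) (\<lambda>xs. rec_nat (f (tl xs)) (\<lambda>k r. g (k # r # tl xs)) (hd xs))"
proof -
  obtain pf where pf: "\<forall>ys. length ys = n \<longrightarrow> eval A pf ys (f ys)" using assms(1) by (auto simp: rc_def)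
  obtain pg where pg: "\<forall>ys. length ys = Suc (Suc n) \<longrightarrow> eval A pg ys (g ys)" using assms(2) by (auto simp: rc_def)
  have main: "eval A (PrimRec pf pg) (k # ys) (rec_nat (f ys) (\<lambda>k r. g (k # r # ys)) k)" if "length ys = n" for k ys
  proof (induction k)
    case 0 then show ?case using pf that by (auto intro: eval.prec0)
  next
    case (Suc k) then show ?case using pg that by (auto intro: eval.precS)
  qed
  show ?thesis unfolding rc_def
  proof (intro exI allI impI)
    fix xs :: "nat list" assume "length xs = Suc n"
    then obtain k ys where "xs = k # ys" "length ys = n" by (cases xs) auto
    then show "eval A (PrimRec pf pg) xs (rec_nat (f (tl xs)) (\<lambda>k r. g (k # r # tl xs)) (hd xs))"
      using main by auto
  qed
qed

lemma map_nth_n: "length xs = n \<Longrightarrow> map (\<lambda>i. xs ! i) [0..<n] = xs"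
  using map_nth[of xs] by simp

lemma rc_rec_nat[rci]:
  assumes "rc A n z" "rc A n a" "rc A (Suc (Suc n)) (\<lambda>ws. s (ws ! 0) (ws ! 1) (tl (tl ws)))"
  shows "rc A n (\<lambda>xs. rec_nat (z xs) (\<lambda>k r. s k r xs) (a xs))"
proof -
  have 1: "rc A (Suc n) (\<lambda>xs. rec_nat (z (tl xs)) (\<lambda>k r. s k r (tl xs)) (hd xs))"
    using rc_prec[OF assms(1) assms(3)] by simp
  have "rc A n (\<lambda>xs. (\<lambda>ys. rec_nat (z (tl ys)) (\<lambda>k r. s k r (tl ys)) (hd ys)) (a xs # map (\<lambda>G. G xs) (map (\<lambda>i xs. xs ! i) [0..<n])))"
    by (rule rc_cons_arg[OF 1 assms(2)]) (auto intro: rc_proj)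
  then show ?thesis
    by (rule rc_cong) (simp add: comp_def map_nth_n)
qed

lemma rc_mu:
  assumes "rc A (Suc n) f" "\<And>xs. length xs = n \<Longrightarrow> \<exists>m. f (m # xs) = 0"
  shows "rc A n (\<lambda>xs. LEAST m. f (m # xs) = 0)"
proof -
  obtain pf where pf: "\<forall>ys. length ys = Suc n \<longrightarrow> eval A pf ys (f ys)" using assms(1) by (auto simp: rc_def)
  show ?thesis unfolding rc_def
  proof (intro exI allI impI)
    fix xs :: "nat list" assume l: "length xs = n"
    let ?m = "LEAST m. f (m # xs) = 0"
    have "f (?m # xs) = 0" using assms(2)[OF l] by (rule LeastI_ex)
    then have 1: "eval A pf (?m # xs) 0" using pf l by (metis length_Cons)
    have "\<forall>m<?m. f (m # xs) \<noteq> 0" using not_less_Least by blast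
    then have 2: "\<forall>m<?m. \<exists>y. y \<noteq> 0 \<and> eval A pf (m # xs) y" using pf l by (metis length_Cons)
    show "eval A (Mu pf) xs ?m" using 1 2 by (rule eval.mu)
  qed
qed

lemma rec_add: "rec_nat b (\<lambda>k r. Suc r) a = a + b" by (induction a) auto
lemma rec_mult: "rec_nat 0 (\<lambda>k r. r + b) a = a * b" by (induction a) auto
lemma rec_pred: "rec_nat 0 (\<lambda>k r. k) a = a - 1" by (induction a) auto
lemma rec_sub: "rec_nat a (\<lambda>k r. r - Suc 0) b = a - b" by (induction b) auto

lemma rc_add[rci]: "rc A n a \<Longrightarrow> rc A n b \<Longrightarrow> rc A n (\<lambda>xs. a xs + b xs)"
proof -
  have "rc A 2 (\<lambda>ys. rec_nat (ys ! 1) (\<lambda>k r. Suc r) (ys ! 0))"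
    by (intro rci) auto
  then have "rc A 2 (\<lambda>ys. ys ! 0 + ys ! 1)" by (simp add: rec_add)
  then show "rc A n a \<Longrightarrow> rc A n b \<Longrightarrow> rc A n (\<lambda>xs. a xs + b xs)" by (rule rc_app2)
qed

lemma rc_pred[rci]: "rc A n a \<Longrightarrow> rc A n (\<lambda>xs. a xs - 1)"
proof -
  have "rc A 1 (\<lambda>ys. rec_nat 0 (\<lambda>k r. k) (ys ! 0))"
    by (intro rci) auto
  then have "rc A 1 (\<lambda>ys. ys ! 0 - 1)" by (simp add: rec_pred)
  then show "rc A n a \<Longrightarrow> rc A n (\<lambda>xs. a xs - 1)" by (rule rc_app1)
qed

lemma rc_sub[rci]: "rc A n a \<Longrightarrow> rc A n b \<Longrightarrow> rc A n (\<lambda>xs. a xs - b xs)"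
proof -
  have "rc A 2 (\<lambda>ys. rec_nat (ys ! 0) (\<lambda>k r. r - 1) (ys ! 1))"
    by (intro rci) auto
  then have "rc A 2 (\<lambda>ys. ys ! 0 - ys ! 1)" by (simp add: rec_sub)
  then show "rc A n a \<Longrightarrow> rc A n b \<Longrightarrow> rc A n (\<lambda>xs. a xs - b xs)" by (rule rc_app2)
qed

lemma rc_mult[rci]: "rc A n a \<Longrightarrow> rc A n b \<Longrightarrow> rc A n (\<lambda>xs. a xs * b xs)"
proof -
  have "rc A 2 (\<lambda>ys. rec_nat 0 (\<lambda>k r. r + ys ! 1) (ys ! 0))"
    by (intro rci) auto
  then have "rc A 2 (\<lambda>ys. ys ! 0 * ys ! 1)" by (simp add: rec_mult)
  then show "rc A n a \<Longrightarrow> rc A n b \<Longrightarrow> rc A n (\<lambda>xs. a xs * b xs)" by (rule rc_app2)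
qed



definition rcB :: "nat set \<Rightarrow> nat \<Rightarrow> (nat list \<Rightarrow> bool) \<Rightarrow> bool" where
  "rcB A n P \<longleftrightarrow> rc A n (\<lambda>xs. if P xs then 1 else 0)"

lemma rc_tltl_nth[rci]: "i < n \<Longrightarrow> rc A (Suc (Suc n)) (\<lambda>ws. tl (tl ws) ! i)"
  by (rule rc_cong[OF rc_proj[of "Suc (Suc i)"]]) (auto simp: nth_tl)

lemma rcB_const[rci]: "rcB A n (\<lambda>xs. b)"
  unfolding rcB_def by (rule rc_const)

lemma rcB_eq[rci]: "rc A n a \<Longrightarrow> rc A n b \<Longrightarrow> rcB A n (\<lambda>xs. a xs = b xs)"
  unfolding rcB_def
  apply (rule rc_cong[where F="\<lambda>xs. 1 - ((a xs - b xs) + (b xs - a xs))"])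
   apply (intro rci; assumption)
  by auto

lemma rcB_le[rci]: "rc A n a \<Longrightarrow> rc A n b \<Longrightarrow> rcB A n (\<lambda>xs. a xs \<le> b xs)"
  unfolding rcB_def
  apply (rule rc_cong[where F="\<lambda>xs. 1 - (a xs - b xs)"])
   apply (intro rci; assumption)
  by auto

lemma rcB_less[rci]: "rc A n a \<Longrightarrow> rc A n b \<Longrightarrow> rcB A n (\<lambda>xs. a xs < b xs)"
  unfolding rcB_def
  apply (rule rc_cong[where F="\<lambda>xs. 1 - (Suc (a xs) - b xs)"])
   apply (intro rci; assumption)
  by auto

lemma rcB_not[rci]: "rcB A n P \<Longrightarrow> rcB A n (\<lambda>xs. \<not> P xs)"
  unfolding rcB_def
  apply (rule rc_cong[where F="\<lambda>xs. 1 - (if P xs then 1 else 0)"])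
   apply (intro rci; assumption)
  by auto

lemma rcB_and[rci]: "rcB A n P \<Longrightarrow> rcB A n Q \<Longrightarrow> rcB A n (\<lambda>xs. P xs \<and> Q xs)"
  unfolding rcB_def
  apply (rule rc_cong[where F="\<lambda>xs. (if P xs then 1 else 0) * (if Q xs then 1 else 0)"])
   apply (intro rci; assumption)
  by auto

lemma rcB_or[rci]: "rcB A n P \<Longrightarrow> rcB A n Q \<Longrightarrow> rcB A n (\<lambda>xs. P xs \<or> Q xs)"
proof -
  assume "rcB A n P" "rcB A n Q"
  then have "rcB A n (\<lambda>xs. \<not> (\<not> P xs \<and> \<not> Q xs))" by (intro rci)
  then show ?thesis by simp
qed

lemma rcB_imp[rci]: "rcB A n P \<Longrightarrow> rcB A n Q \<Longrightarrow> rcB A n (\<lambda>xs. P xs \<longrightarrow> Q xs)"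
proof -
  assume "rcB A n P" "rcB A n Q"
  then have "rcB A n (\<lambda>xs. \<not> P xs \<or> Q xs)" by (intro rci)
  then show ?thesis by simp
qed

lemma rc_if[rci]: "rcB A n P \<Longrightarrow> rc A n a \<Longrightarrow> rc A n b \<Longrightarrow> rc A n (\<lambda>xs. if P xs then a xs else b xs)"
  unfolding rcB_def
  apply (rule rc_cong[where F="\<lambda>xs. (if P xs then 1 else 0) * a xs + (1 - (if P xs then 1 else 0)) * b xs"])
   apply (intro rci; assumption)
  by auto

lemma rcB_mem[rci]: "rc A n a \<Longrightarrow> rcB A n (\<lambda>xs. a xs \<in> A)"
proof -
  have "rc A 1 (\<lambda>ys. if ys ! 0 \<in> A then 1 else 0)"
    unfolding rc_def
    apply (rule exI[of _ Query])
    using eval.query[of A] by (metis arg0_def hd_conv_nth length_0_conv zero_neq_one)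
  then show "rc A n a \<Longrightarrow> rcB A n (\<lambda>xs. a xs \<in> A)" unfolding rcB_def by (rule rc_app1)
qed

lemma rc_least[rci]:
  assumes "rcB A (Suc n) (\<lambda>ws. P (hd ws) (tl ws))" "\<And>xs. length xs = n \<Longrightarrow> \<exists>m. P m xs"
  shows "rc A n (\<lambda>xs. LEAST m. P m xs)"
proof -
  have "rc A (Suc n) (\<lambda>ws. if P (hd ws) (tl ws) then 0 else 1)"
    by (intro rci assms(1))
  then have "rc A n (\<lambda>xs. LEAST m. (\<lambda>ws. if P (hd ws) (tl ws) then 0 else 1) (m # xs) = (0::nat))"
    by (rule rc_mu) (use assms(2) in auto)
  moreover have "(\<lambda>m. (if P m xs then 0 else 1) = (0::nat)) = (\<lambda>m. P m xs)" for xs by auto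
  ultimately show ?thesis by simp
qed

lemma rcB_ball[rci]:
  assumes "rcB A (Suc n) (\<lambda>ws. P (hd ws) (tl ws))" "rc A n b"
  shows "rcB A n (\<lambda>xs. \<forall>i<b xs. P i xs)"
proof -
  have e: "rec_nat (1::nat) (\<lambda>k r. r * (if P k xs then 1 else 0)) m = (if \<forall>i<m. P i xs then 1 else 0)" for m xs
    by (induction m) (auto simp: less_Suc_eq)
  have 1: "rc A (Suc n) (\<lambda>ws. if P (hd ws) (tl ws) then 1 else 0)" using assms(1) unfolding rcB_def .
  have 2: "rc A (Suc (Suc n)) (\<lambda>ws. ws ! 1 * (if P (ws ! 0) (tl (tl ws)) then 1 else 0))"
  proof -
    have "rc A (Suc (Suc n)) (\<lambda>ws. (\<lambda>zs. if P (hd zs) (tl zs) then 1 else 0) ((ws ! 0) # map (\<lambda>G. G ws) (map (\<lambda>i ws. tl (tl ws) ! i) [0..<n])))"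
      by (rule rc_cons_arg[OF 1]) (auto intro!: rc_proj rc_tltl_nth)
    moreover have "map (\<lambda>i. tl (tl ws) ! i) [0..<n] = tl (tl ws)" if "length ws = Suc (Suc n)" for ws :: "nat list"
      using that by (intro map_nth_n) simp
    ultimately have "rc A (Suc (Suc n)) (\<lambda>ws. if P (ws ! 0) (tl (tl ws)) then 1 else 0)"
      by (elim rc_cong) (simp add: comp_def)
    then show ?thesis by (intro rci) (auto simp: rcB_def)
  qed
  have "rc A n (\<lambda>xs. rec_nat 1 (\<lambda>k r. r * (if P k xs then 1 else 0)) (b xs))"
    by (rule rc_rec_nat) (use 2 assms(2) in \<open>auto intro: rc_const\<close>)
  then show ?thesis unfolding rcB_def e .
qed

lemma rcB_bex[rci]:
  assumes "rcB A (Suc n) (\<lambda>ws. P (hd ws) (tl ws))" "rc A n b"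
  shows "rcB A n (\<lambda>xs. \<exists>i<b xs. P i xs)"
proof -
  have "rcB A n (\<lambda>xs. \<not> (\<forall>i<b xs. \<not> P i xs))"
    by (intro rci assms)
  then show ?thesis by simp
qed

lemma rc_funpow[rci]:
  assumes "rc A 1 (\<lambda>ys. f (ys ! 0))" "rc A n a" "rc A n b"
  shows "rc A n (\<lambda>xs. (f ^^ a xs) (b xs))"
proof -
  have e: "rec_nat c (\<lambda>k r. f r) m = (f ^^ m) c" for m c by (induction m) auto
  have "rc A (Suc (Suc n)) (\<lambda>ws. f (ws ! 1))" by (rule rc_app1[OF assms(1)]) (intro rci; simp)
  then have "rc A n (\<lambda>xs. rec_nat (b xs) (\<lambda>k r. f r) (a xs))"
    by (intro rc_rec_nat assms(2,3))
  then show ?thesis by (simp add: e)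
qed



section \<open>Coding functions\<close>

lemma rc_triangle[rci]: "rc A n a \<Longrightarrow> rc A n (\<lambda>xs. triangle (a xs))"
proof -
  have e: "rec_nat 0 (\<lambda>k r. Suc (r + k)) m = triangle m" for m by (induction m) auto
  assume "rc A n a"
  then have "rc A n (\<lambda>xs. rec_nat 0 (\<lambda>k r. r + Suc k) (a xs))" by (intro rci) auto
  then show ?thesis by (simp add: e)
qed

lemma rc_penc[rci]: "rc A n a \<Longrightarrow> rc A n b \<Longrightarrow> rc A n (\<lambda>xs. prod_encode (a xs, b xs))"
proof -
  assume "rc A n a" "rc A n b"
  then have "rc A n (\<lambda>xs. triangle (a xs + b xs) + a xs)" by (intro rci)
  then show ?thesis by (simp add: prod_encode_def)
qed

lemma triangle_mono: "a \<le> b \<Longrightarrow> triangle a \<le> triangle b"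
  by (induction b) (auto simp: le_Suc_eq)

definition pdl :: "nat \<Rightarrow> nat" where "pdl n = (LEAST k. n < triangle (Suc k))"

lemma pdl_eq: "prod_decode n = (x, y) \<Longrightarrow> pdl n = x + y"
proof -
  assume d: "prod_decode n = (x, y)"
  have n: "n = triangle (x + y) + x" using prod_decode_inverse[of n] d by (simp add: prod_encode_def)
  show ?thesis unfolding pdl_def
  proof (rule Least_equality)
    show "n < triangle (Suc (x + y))" using n by simp
  next
    fix k assume "n < triangle (Suc k)"
    show "x + y \<le> k"
    proof (rule ccontr)
      assume "\<not> x + y \<le> k"
      then have "triangle (Suc k) \<le> triangle (x + y)" by (intro triangle_mono) simp
      with \<open>n < triangle (Suc k)\<close> n show False by simp
    qed
  qed
qed

lemma fst_prod_decode: "fst (prod_decode n) = n - triangle (pdl n)"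
proof -
  obtain x y where d: "prod_decode n = (x, y)" by (cases "prod_decode n")
  have "n = triangle (x + y) + x" using prod_decode_inverse[of n] d by (simp add: prod_encode_def)
  then show ?thesis using pdl_eq[OF d] d by simp
qed

lemma snd_prod_decode: "snd (prod_decode n) = pdl n - fst (prod_decode n)"
  by (cases "prod_decode n") (simp add: pdl_eq)

lemma ex_tri: "\<exists>k. m < triangle (Suc k)"
proof -
  have "m \<le> triangle m" by (induction m) auto
  then show ?thesis by (intro exI[of _ m]) simp
qed

lemma rc_pdl[rci]: "rc A n a \<Longrightarrow> rc A n (\<lambda>xs. pdl (a xs))"
proof -
  assume "rc A n a"
  then have "rc A n (\<lambda>xs. LEAST k. a xs < triangle (Suc k))"
    by (intro rci) (assumption, rule ex_tri)
  then show ?thesis by (simp add: pdl_def)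
qed

lemma rc_fst_dec[rci]: "rc A n a \<Longrightarrow> rc A n (\<lambda>xs. fst (prod_decode (a xs)))"
proof -
  assume "rc A n a"
  then have "rc A n (\<lambda>xs. a xs - triangle (pdl (a xs)))" by (intro rci)
  then show ?thesis by (simp add: fst_prod_decode)
qed

lemma rc_snd_dec[rci]: "rc A n a \<Longrightarrow> rc A n (\<lambda>xs. snd (prod_decode (a xs)))"
proof -
  assume "rc A n a"
  then have "rc A n (\<lambda>xs. pdl (a xs) - fst (prod_decode (a xs)))" by (intro rci)
  then show ?thesis by (simp add: snd_prod_decode[symmetric])
qed

definition hdc :: "nat \<Rightarrow> nat" where "hdc c = (if c = 0 then 0 else fst (prod_decode (c - 1)))"
definition tlc :: "nat \<Rightarrow> nat" where "tlc c = (if c = 0 then 0 else snd (prod_decode (c - 1)))"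

lemma rc_hdc[rci]: "rc A n a \<Longrightarrow> rc A n (\<lambda>xs. hdc (a xs))"
  unfolding hdc_def by (intro rci)

lemma rc_tlc[rci]: "rc A n a \<Longrightarrow> rc A n (\<lambda>xs. tlc (a xs))"
  unfolding tlc_def by (intro rci)

lemma hdc_enc: "hdc (list_encode xs) = (if xs = [] then 0 else hd xs)"
  by (cases xs) (auto simp: hdc_def)

lemma tlc_enc: "tlc (list_encode xs) = list_encode (tl xs)"
  by (cases xs) (auto simp: tlc_def)

lemma tlc_iter: "(tlc ^^ i) (list_encode xs) = list_encode (drop i xs)"
  by (induction i) (auto simp: tlc_enc drop_Suc tl_drop)

definition nthc :: "nat \<Rightarrow> nat \<Rightarrow> nat" where "nthc c i = hdc ((tlc ^^ i) c)"
definition lenc :: "nat \<Rightarrow> nat" where "lenc c = (LEAST i. (tlc ^^ i) c = 0)"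

lemma nthc_enc: "i < length xs \<Longrightarrow> nthc (list_encode xs) i = xs ! i"
  by (auto simp: nthc_def tlc_iter hdc_enc hd_drop_conv_nth)

lemma nthc_enc_ge: "length xs \<le> i \<Longrightarrow> nthc (list_encode xs) i = 0"
  by (auto simp: nthc_def tlc_iter hdc_enc hdc_def)

lemma list_encode_0: "list_encode xs = 0 \<longleftrightarrow> xs = []"
  by (cases xs) auto

lemma lenc_enc: "lenc (list_encode xs) = length xs"
  unfolding lenc_def tlc_iter list_encode_0
  by (rule Least_equality) auto

lemma rc_nthc[rci]: "rc A n a \<Longrightarrow> rc A n b \<Longrightarrow> rc A n (\<lambda>xs. nthc (a xs) (b xs))"
proof -
  assume a: "rc A n a" "rc A n b"
  have "rc A n (\<lambda>xs. hdc ((tlc ^^ b xs) (a xs)))" by (intro rci a) simp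
  then show ?thesis by (simp add: nthc_def)
qed

lemma rc_lenc[rci]: "rc A n a \<Longrightarrow> rc A n (\<lambda>xs. lenc (a xs))"
proof -
  assume a: "rc A n a"
  have "rc A n (\<lambda>xs. LEAST i. (tlc ^^ i) (a xs) = 0)"
    apply (intro rci rc_tl_arg[OF a])
      apply simp
     apply (rule a)
    subgoal for xs using tlc_iter[of "length (list_decode (a xs))" "list_decode (a xs)"]
      by (auto intro!: exI[of _ "length (list_decode (a xs))"])
    done
  then show ?thesis by (simp add: lenc_def)
qed

lemma rc_build:
  assumes F: "rc A (Suc n) (\<lambda>ws. F (hd ws) (tl ws))" and L: "rc A n L"
  shows "rc A n (\<lambda>xs. list_encode (map (\<lambda>i. F i xs) [0..<L xs]))"
proof -
  have e: "j \<le> l \<Longrightarrow> rec_nat 0 (\<lambda>k r. Suc (prod_encode (F (l - Suc k) xs, r))) j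
      = list_encode (map (\<lambda>i. F i xs) [l - j..<l])" for j l xs
  proof (induction j)
    case 0 then show ?case by simp
  next
    case (Suc j)
    then have "[l - Suc j..<l] = (l - Suc j) # [l - j..<l]"
      by (metis Suc_diff_Suc Suc_le_lessD diff_less upt_conv_Cons zero_less_Suc less_le_trans)
    with Suc show ?case by simp
  qed
  have Ft: "rc A (Suc (Suc n)) (\<lambda>ws. F (L (tl (tl ws)) - Suc (ws ! 0)) (tl (tl ws)))"
  proof -
    have "rc A (Suc (Suc n)) (\<lambda>ws. (\<lambda>zs. F (hd zs) (tl zs)) ((L (tl (tl ws)) - Suc (ws ! 0)) # map (\<lambda>G. G ws) (map (\<lambda>i ws. tl (tl ws) ! i) [0..<n])))"
      by (rule rc_cons_arg[OF F]) (auto intro!: rci L)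
    moreover have "map (\<lambda>i. tl (tl ws) ! i) [0..<n] = tl (tl ws)" if "length ws = Suc (Suc n)" for ws :: "nat list"
      using that by (intro map_nth_n) simp
    ultimately show ?thesis by (elim rc_cong) (simp add: comp_def)
  qed
  have "rc A n (\<lambda>xs. rec_nat 0 (\<lambda>k r. Suc (prod_encode (F (L xs - Suc k) xs, r))) (L xs))"
    by (rule rc_rec_nat) (auto intro!: rci L Ft)
  then show ?thesis by (simp add: e)
qed



lemma map_drop_nth: "length ws = j + m \<Longrightarrow> map (\<lambda>i. ws ! (j + i)) [0..<m] = drop j ws"
  by (rule nth_equalityI) auto

lemma rc_drop: assumes "rc A m F" "N = j + m" shows "rc A N (\<lambda>ws. F (drop j ws))"
proof -
  have "rc A N (\<lambda>ws. F (map (\<lambda>G. G ws) (map (\<lambda>i ws. ws ! (j + i)) [0..<m])))"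
    by (rule rc_compL[OF assms(1)]) (auto intro!: rc_proj simp: assms(2))
  then show ?thesis by (rule rc_cong) (simp add: comp_def map_drop_nth assms(2))
qed

lemma rc_drop1: assumes "rc A (Suc m) F" "rc A N a" "N = j + m" shows "rc A N (\<lambda>ws. F (a ws # drop j ws))"
proof -
  have "rc A N (\<lambda>ws. F (map (\<lambda>G. G ws) (a # map (\<lambda>i ws. ws ! (j + i)) [0..<m])))"
    by (rule rc_compL[OF assms(1)]) (insert assms, auto intro!: rc_proj)
  then show ?thesis by (rule rc_cong) (simp add: comp_def map_drop_nth assms(3))
qed

lemma rc_drop2: assumes "rc A (Suc (Suc m)) F" "rc A N a" "rc A N b" "N = j + m"
  shows "rc A N (\<lambda>ws. F (a ws # b ws # drop j ws))"
proof -
  have "rc A N (\<lambda>ws. F (map (\<lambda>G. G ws) (a # b # map (\<lambda>i ws. ws ! (j + i)) [0..<m])))"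
    by (rule rc_compL[OF assms(1)]) (insert assms, auto intro!: rc_proj)
  then show ?thesis by (rule rc_cong) (simp add: comp_def map_drop_nth assms(4))
qed

lemma rc_drop3: assumes "rc A (Suc (Suc (Suc m))) F" "rc A N a" "rc A N b" "rc A N c" "N = j + m"
  shows "rc A N (\<lambda>ws. F (a ws # b ws # c ws # drop j ws))"
proof -
  have "rc A N (\<lambda>ws. F (map (\<lambda>G. G ws) (a # b # c # map (\<lambda>i ws. ws ! (j + i)) [0..<m])))"
    by (rule rc_compL[OF assms(1)]) (insert assms, auto intro!: rc_proj)
  then show ?thesis by (rule rc_cong) (simp add: comp_def map_drop_nth assms(5))
qed

section \<open>Clocked evaluation\<close>

fun msr :: "(nat \<Rightarrow> nat) \<Rightarrow> nat \<Rightarrow> nat" where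
  "msr w 0 = 0"
| "msr w (Suc k) = (if msr w k \<noteq> 0 then msr w k else if w k = 0 then 1 else if w k = 1 then Suc (Suc k) else 0)"

fun evc :: "rf \<Rightarrow> nat \<Rightarrow> nat list \<Rightarrow> nat" where
  "evc Zero t xs = 1"
| "evc Succ t xs = Suc (Suc (arg0 xs))"
| "evc (Proj i) t xs = Suc (if i < length xs then xs ! i else 0)"
| "evc Query t xs = 1"
| "evc (Comp f gs) t xs = (if 0 \<in> set (map (\<lambda>g. evc g t xs) gs) then 0
      else evc f t (map (\<lambda>g. evc g t xs - 1) gs))"
| "evc (PrimRec f g) t [] = 0"
| "evc (PrimRec f g) t (n # xs) = rec_nat (evc f t xs) (\<lambda>k r. if r = 0 then 0 else evc g t (k # (r - 1) # xs)) n"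
| "evc (Mu f) t xs = (if 2 \<le> msr (\<lambda>k. evc f t (k # xs)) t then msr (\<lambda>k. evc f t (k # xs)) t - 1 else 0)"

lemma msr_closed: "msr w j = (if \<exists>k<j. w k < 2 then (if w (LEAST k. w k < 2) = 0 then 1 else Suc (Suc (LEAST k. w k < 2))) else 0)"
proof (induction j)
  case 0 then show ?case by simp
next
  case (Suc j)
  show ?case
  proof (cases "\<exists>k<j. w k < 2")
    case True
    then have "msr w j \<noteq> 0" using Suc by auto
    with True Suc show ?thesis by (auto simp: less_Suc_eq)
  next
    case False
    then have m0: "msr w j = 0" using Suc by simp
    show ?thesis
    proof (cases "w j < 2")
      case True
      have "(LEAST k. w k < 2) = j"
        by (rule Least_equality) (use True False in \<open>auto simp: not_less\<close>)
      with True False m0 show ?thesis by auto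
    next
      case f2: False
      then have "\<not> (\<exists>k<Suc j. w k < 2)" using False by (auto simp: less_Suc_eq)
      with m0 f2 show ?thesis by auto
    qed
  qed
qed

lemma msr_found:
  assumes "msr w j = Suc (Suc y)"
  shows "y < j" "w y = 1" "\<forall>k<y. 2 \<le> w k"
proof -
  from assms have ex: "\<exists>k<j. w k < 2" by (auto simp: msr_closed split: if_splits)
  with assms have y: "y = (LEAST k. w k < 2)" and nz: "w (LEAST k. w k < 2) \<noteq> 0"
    by (auto simp: msr_closed split: if_splits)
  from ex obtain k where "k < j" "w k < 2" by auto
  then have "y \<le> k" unfolding y by (simp add: Least_le)
  with \<open>k < j\<close> show "y < j" by simp
  have "w y < 2" unfolding y using ex by (metis LeastI)
  with nz y show "w y = 1" by simp
  show "\<forall>k<y. 2 \<le> w k" unfolding y using not_less_Least by fastforce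
qed

lemma msr_intro:
  assumes "y < j" "w y = 1" "\<forall>k<y. 2 \<le> w k"
  shows "msr w j = Suc (Suc y)"
proof -
  have L: "(LEAST k. w k < 2) = y"
    by (rule Least_equality) (use assms in \<open>auto simp: not_less\<close>)
  have "\<exists>k<j. w k < 2" using assms by auto
  then show ?thesis unfolding msr_closed L using assms by simp
qed

lemma evc_sound: "evc p t xs = Suc y \<Longrightarrow> eval {} p xs y"
proof (induction p arbitrary: xs y)
  case Zero then show ?case by (auto intro: eval.zero)
next
  case Succ then show ?case using eval.succ[of "{}" xs] by simp
next
  case (Proj i) then show ?case using eval.proj[of "{}" i xs] by simp
next
  case Query then show ?case using eval.query[of "{}" xs] by simp
next
  case (Comp f gs)
  from Comp.prems have nz: "\<forall>g\<in>set gs. evc g t xs \<noteq> 0" and fv: "evc f t (map (\<lambda>g. evc g t xs - 1) gs) = Suc y"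
    by (auto split: if_splits)
  have all: "\<forall>g\<in>set gs. eval {} g xs (evc g t xs - 1)"
  proof
    fix g assume g: "g \<in> set gs"
    with nz obtain v where "evc g t xs = Suc v" by (metis not0_implies_Suc)
    then show "eval {} g xs (evc g t xs - 1)" using Comp.IH(2)[OF g] by simp
  qed
  then have "list_all2 (\<lambda>g y. eval {} g xs y) gs (map (\<lambda>g. evc g t xs - 1) gs)"
    by (induction gs) auto
  moreover have "eval {} f (map (\<lambda>g. evc g t xs - 1) gs) y" using Comp.IH(1) fv by blast
  ultimately show ?case by (rule eval.comp)
next
  case (PrimRec f g)
  show ?case
  proof (cases xs)
    case Nil with PrimRec.prems show ?thesis by simp
  next
    case (Cons n xs')
    have "rec_nat (evc f t xs') (\<lambda>k r. if r = 0 then 0 else evc g t (k # (r - 1) # xs')) n = Suc y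
       \<Longrightarrow> eval {} (PrimRec f g) (n # xs') y" for y
    proof (induction n arbitrary: y)
      case 0 then show ?case using PrimRec.IH(1) by (auto intro: eval.prec0)
    next
      case (Suc n)
      let ?R = "rec_nat (evc f t xs') (\<lambda>k r. if r = 0 then 0 else evc g t (k # (r - 1) # xs'))"
      have eq: "?R (Suc n) = (if ?R n = 0 then 0 else evc g t (n # (?R n - 1) # xs'))" by simp
      from Suc.prems eq have nz: "?R n \<noteq> 0" and gv: "evc g t (n # (?R n - 1) # xs') = Suc y"
        by (simp_all split: if_splits)
      obtain r where r: "?R n = Suc r" using nz not0_implies_Suc by blast
      from gv r have "evc g t (n # r # xs') = Suc y" by simp
      then have "eval {} g (n # r # xs') y" using PrimRec.IH(2) by blast
      with Suc.IH[OF r] show ?case by (rule eval.precS)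
    qed
    from this[of y] PrimRec.prems Cons show ?thesis by simp
  qed
next
  case (Mu f)
  let ?w = "\<lambda>k. evc f t (k # xs)"
  from Mu.prems have m: "msr ?w t = Suc (Suc y)" by (auto split: if_splits)
  note fd = msr_found[OF m]
  have "eval {} f (y # xs) 0" using fd(2) Mu.IH by simp
  moreover have "\<forall>m<y. \<exists>v. v \<noteq> 0 \<and> eval {} f (m # xs) v"
  proof (intro allI impI)
    fix m assume "m < y"
    with fd(3) have "2 \<le> ?w m" by simp
    then obtain v where "?w m = Suc v" "v \<noteq> 0" by (cases "?w m") auto
    with Mu.IH show "\<exists>v. v \<noteq> 0 \<and> eval {} f (m # xs) v" by blast
  qed
  ultimately show ?case by (rule eval.mu)
qed

lemma evc_mono: "evc p t xs = Suc y \<Longrightarrow> t \<le> t' \<Longrightarrow> evc p t' xs = Suc y"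
proof (induction p arbitrary: xs y)
  case (Comp f gs)
  from Comp.prems have nz: "\<forall>g\<in>set gs. evc g t xs \<noteq> 0" and fv: "evc f t (map (\<lambda>g. evc g t xs - 1) gs) = Suc y"
    by (auto split: if_splits)
  have eq: "\<forall>g\<in>set gs. evc g t' xs = evc g t xs"
  proof
    fix g assume g: "g \<in> set gs"
    with nz obtain v where "evc g t xs = Suc v" by (metis not0_implies_Suc)
    with Comp.IH(2)[OF g] Comp.prems(2) show "evc g t' xs = evc g t xs" by simp
  qed
  have fv': "evc f t' (map (\<lambda>g. evc g t xs - 1) gs) = Suc y" using Comp.IH(1) fv Comp.prems(2) by blast
  have nz0: "0 \<notin> set (map (\<lambda>g. evc g t' xs) gs)" using nz eq by auto
  have "evc (Comp f gs) t' xs = evc f t' (map (\<lambda>g. evc g t' xs - 1) gs)" using nz0 by simp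
  also have "\<dots> = evc f t' (map (\<lambda>g. evc g t xs - 1) gs)" using eq by (intro arg_cong[where f="evc f t'"] map_cong) auto
  finally show ?case using fv' by simp
next
  case (PrimRec f g)
  show ?case
  proof (cases xs)
    case Nil with PrimRec.prems show ?thesis by simp
  next
    case (Cons n xs')
    have "rec_nat (evc f t xs') (\<lambda>k r. if r = 0 then 0 else evc g t (k # (r - 1) # xs')) n = Suc y
       \<Longrightarrow> rec_nat (evc f t' xs') (\<lambda>k r. if r = 0 then 0 else evc g t' (k # (r - 1) # xs')) n = Suc y" for y
    proof (induction n arbitrary: y)
      case 0 then show ?case using PrimRec.IH(1) PrimRec.prems(2) by auto
    next
      case (Suc n)
      let ?R = "rec_nat (evc f t xs') (\<lambda>k r. if r = 0 then 0 else evc g t (k # (r - 1) # xs'))"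
      let ?R' = "rec_nat (evc f t' xs') (\<lambda>k r. if r = 0 then 0 else evc g t' (k # (r - 1) # xs'))"
      have eq: "?R (Suc n) = (if ?R n = 0 then 0 else evc g t (n # (?R n - 1) # xs'))" by simp
      have eq': "?R' (Suc n) = (if ?R' n = 0 then 0 else evc g t' (n # (?R' n - 1) # xs'))" by simp
      from Suc.prems eq have nz: "?R n \<noteq> 0" and gv: "evc g t (n # (?R n - 1) # xs') = Suc y"
        by (simp_all split: if_splits)
      obtain r where r: "?R n = Suc r" using nz not0_implies_Suc by blast
      from gv r have "evc g t (n # r # xs') = Suc y" by simp
      then have g': "evc g t' (n # r # xs') = Suc y" using PrimRec.IH(2) PrimRec.prems(2) by blast
      have "?R' n = Suc r" using Suc.IH[OF r] .
      with eq' g' show ?case by simp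
    qed
    from this[of y] PrimRec.prems Cons show ?thesis by simp
  qed
next
  case (Mu f)
  let ?w = "\<lambda>k. evc f t (k # xs)"
  let ?w' = "\<lambda>k. evc f t' (k # xs)"
  from Mu.prems have m: "msr ?w t = Suc (Suc y)" by (auto split: if_splits)
  note fd = msr_found[OF m]
  have "msr ?w' t' = Suc (Suc y)"
  proof (rule msr_intro)
    show "y < t'" using fd(1) Mu.prems(2) by simp
    show "?w' y = 1" using fd(2) Mu.IH Mu.prems(2) by simp
    show "\<forall>k<y. 2 \<le> ?w' k"
    proof (intro allI impI)
      fix k assume "k < y"
      with fd(3) have "2 \<le> ?w k" by simp
      then obtain v where "?w k = Suc v" by (cases "?w k") auto
      with Mu.IH Mu.prems(2) \<open>2 \<le> ?w k\<close> show "2 \<le> ?w' k" by simp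
    qed
  qed
  then show ?case by simp
qed auto

lemma list_all2_time:
  assumes "list_all2 (\<lambda>g y. \<exists>t. evc g t xs = Suc y) gs ys"
  shows "\<exists>T. list_all2 (\<lambda>g y. evc g T xs = Suc y) gs ys"
  using assms
proof (induction gs arbitrary: ys)
  case Nil then show ?case by auto
next
  case (Cons g gs)
  then obtain y ys' where ys: "ys = y # ys'" "\<exists>t. evc g t xs = Suc y" "list_all2 (\<lambda>g y. \<exists>t. evc g t xs = Suc y) gs ys'"
    by (auto simp: list_all2_Cons1)
  then obtain t where t: "evc g t xs = Suc y" by auto
  from Cons.IH[OF ys(3)] obtain T where T: "list_all2 (\<lambda>g y. evc g T xs = Suc y) gs ys'" by auto
  have "list_all2 (\<lambda>g y. evc g (max t T) xs = Suc y) gs ys'"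
    using T by (rule list_all2_mono) (erule evc_mono, simp)
  moreover have "evc g (max t T) xs = Suc y" using evc_mono[OF t] by simp
  ultimately show ?case using ys by (auto intro!: exI[of _ "max t T"])
qed

lemma evc_complete: "eval {} p xs y \<Longrightarrow> \<exists>t. evc p t xs = Suc y"
proof (induction rule: eval.induct)
  case (zero xs) then show ?case by simp
next
  case (succ xs) then show ?case by simp
next
  case (proj i xs) then show ?case by simp
next
  case (query xs) then show ?case by simp
next
  case (comp xs gs ys f z)
  have "list_all2 (\<lambda>g y. \<exists>t. evc g t xs = Suc y) gs ys"
    using comp.IH(1) by (rule list_all2_mono) auto
  then obtain T where T: "list_all2 (\<lambda>g y. evc g T xs = Suc y) gs ys" using list_all2_time by blast
  obtain tf where tf: "evc f tf ys = Suc z" using comp.IH(2) by auto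
  let ?T = "max T tf"
  have T': "list_all2 (\<lambda>g y. evc g ?T xs = Suc y) gs ys"
    using T by (rule list_all2_mono) (erule evc_mono, simp)
  then have mp: "map (\<lambda>g. evc g ?T xs) gs = map Suc ys"
    by (induction rule: list_all2_induct) auto
  then have 1: "0 \<notin> set (map (\<lambda>g. evc g ?T xs) gs)" by auto
  have 2: "map (\<lambda>g. evc g ?T xs - 1) gs = ys"
    using arg_cong[OF mp, of "map (\<lambda>v. v - 1)"] by (simp add: comp_def)
  have "evc f ?T ys = Suc z" using evc_mono[OF tf] by simp
  with 1 2 show ?case by (auto intro!: exI[of _ ?T])
next
  case (prec0 f xs y g)
  then obtain t where "evc f t xs = Suc y" by auto
  then show ?case by auto
next
  case (precS f g n xs r y)
  obtain t1 where t1: "evc (PrimRec f g) t1 (n # xs) = Suc r" using precS.IH(1) by auto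
  obtain t2 where t2: "evc g t2 (n # r # xs) = Suc y" using precS.IH(2) by auto
  let ?T = "max t1 t2"
  have "evc (PrimRec f g) ?T (n # xs) = Suc r" using evc_mono[OF t1] by simp
  moreover have "evc g ?T (n # r # xs) = Suc y" using evc_mono[OF t2] by simp
  ultimately show ?case by (auto intro!: exI[of _ ?T])
next
  case (mu f n xs)
  obtain tn where tn: "evc f tn (n # xs) = Suc 0" using mu.IH(1) by auto
  have "\<forall>m<n. \<exists>t v. v \<noteq> 0 \<and> evc f t (m # xs) = Suc v" using mu.IH(2) by blast
  then obtain tm vm where tm: "\<forall>m<n. vm m \<noteq> 0 \<and> evc f (tm m) (m # xs) = Suc (vm m)" by metis
  let ?T = "Suc (n + tn + (\<Sum>m<n. tm m))"
  have le: "tm m \<le> ?T" if "m < n" for m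
  proof -
    have "tm m \<le> (\<Sum>m<n. tm m)" using that by (intro member_le_sum) auto
    then show ?thesis by simp
  qed
  have "msr (\<lambda>k. evc f ?T (k # xs)) ?T = Suc (Suc n)"
  proof (rule msr_intro)
    show "n < ?T" by simp
    show "evc f ?T (n # xs) = 1" using evc_mono[OF tn] by simp
    show "\<forall>k<n. 2 \<le> evc f ?T (k # xs)"
    proof (intro allI impI)
      fix k assume k: "k < n"
      have "evc f ?T (k # xs) = Suc (vm k)" using evc_mono[of f "tm k" "k # xs" "vm k" ?T] tm k le[OF k] by simp
      with tm k show "2 \<le> evc f ?T (k # xs)" by auto
    qed
  qed
  then show ?case by (auto intro!: exI[of _ ?T])
qed



lemma rcB_cong: "rcB A n P \<Longrightarrow> (\<And>xs. length xs = n \<Longrightarrow> P xs = Q xs) \<Longrightarrow> rcB A n Q"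
  unfolding rcB_def by (erule rc_cong) simp

lemma rcB_list_ex: "\<forall>g\<in>set gs. rc A n (F g) \<Longrightarrow> rcB A n (\<lambda>xs. \<exists>g\<in>set gs. F g xs = 0)"
proof (induction gs)
  case Nil then show ?case by (simp add: rcB_const)
next
  case (Cons g gs)
  then have "rcB A n (\<lambda>xs. F g xs = 0 \<or> (\<exists>g\<in>set gs. F g xs = 0))" by (intro rci) auto
  then show ?case by simp
qed

lemma msr_rec: "msr w j = rec_nat 0 (\<lambda>k st. if st \<noteq> 0 then st else if w k = 0 then 1 else if w k = 1 then Suc (Suc k) else 0) j"
  by (induction j) auto

lemma evc_rc: "rc A (Suc l) (\<lambda>ys. evc p (hd ys) (tl ys))"
proof (induction p arbitrary: l)
  case Zero then show ?case by (simp add: rc_const)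
next
  case Succ
  show ?case
  proof (cases l)
    case 0
    show ?thesis by (rule rc_cong[OF rc_const[of A _ 2]]) (use 0 in \<open>auto simp: arg0_def length_Suc_conv\<close>)
  next
    case (Suc l')
    have "rc A (Suc l) (\<lambda>ys. Suc (Suc (tl ys ! 0)))" by (intro rci) (simp add: Suc)
    then show ?thesis by (rule rc_cong) (auto simp: arg0_def Suc length_Suc_conv)
  qed
next
  case (Proj i)
  show ?case
  proof (cases "i < l")
    case True
    have "rc A (Suc l) (\<lambda>ys. Suc (tl ys ! i))" by (intro rci True)
    then show ?thesis by (rule rc_cong) (use True in auto)
  next
    case False
    show ?thesis by (rule rc_cong[OF rc_const[of A _ 1]]) (use False in auto)
  qed
next
  case Query then show ?case by (simp add: rc_const)
next
  case (Comp f gs)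
  let ?m = "length gs"
  have c: "rcB A (Suc l) (\<lambda>ys. \<exists>g\<in>set gs. evc g (hd ys) (tl ys) = 0)"
    by (rule rcB_list_ex) (use Comp.IH(2) in auto)
  have "rc A (Suc l) (\<lambda>ys. (\<lambda>zs. evc f (hd zs) (tl zs)) (map (\<lambda>G. G ys) ((\<lambda>ys. hd ys) # map (\<lambda>g ys. evc g (hd ys) (tl ys) - 1) gs)))"
    by (rule rc_compL[OF Comp.IH(1)[of ?m]]) (auto intro!: rci Comp.IH(2))
  then have v: "rc A (Suc l) (\<lambda>ys. evc f (hd ys) (map (\<lambda>g. evc g (hd ys) (tl ys) - 1) gs))"
    by (simp add: comp_def)
  have "rc A (Suc l) (\<lambda>ys. if \<exists>g\<in>set gs. evc g (hd ys) (tl ys) = 0 then 0 else evc f (hd ys) (map (\<lambda>g. evc g (hd ys) (tl ys) - 1) gs))"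
    by (intro rc_if c v rc_const)
  then show ?case by (rule rc_cong) auto
next
  case (PrimRec f g)
  show ?case
  proof (cases l)
    case 0
    show ?thesis by (rule rc_cong[OF rc_const[of A _ 0]]) (use 0 in \<open>auto simp: length_Suc_conv\<close>)
  next
    case (Suc l')
    have z: "rc A (Suc (Suc l')) (\<lambda>ys. evc f (hd ys) (drop 2 ys))"
      using rc_drop1[OF PrimRec.IH(1)[of l'] rc_hd[of A "Suc l'"], where j=2] by simp
    have gg: "rc A (Suc (Suc (Suc (Suc l')))) (\<lambda>ws. evc g (ws ! 2) (ws ! 0 # (ws ! 1 - 1) # drop 4 ws))"
      using rc_drop3[OF PrimRec.IH(2)[of "Suc (Suc l')"] rc_proj[of 2 "Suc (Suc (Suc (Suc l')))" A] rc_proj[of 0 "Suc (Suc (Suc (Suc l')))" A] rc_pred[OF rc_proj[of 1 "Suc (Suc (Suc (Suc l')))" A]], where j=4]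
      by simp
    have gg': "rc A (Suc (Suc (Suc (Suc l')))) (\<lambda>ws. if ws ! 1 = 0 then 0 else evc g (hd (tl (tl ws))) (ws ! 0 # (ws ! 1 - 1) # drop 2 (tl (tl ws))))"
    proof -
      have "rc A (Suc (Suc (Suc (Suc l')))) (\<lambda>ws. if ws ! 1 = 0 then 0 else evc g (ws ! 2) (ws ! 0 # (ws ! 1 - 1) # drop 4 ws))"
        by (intro rci gg) auto
      then show ?thesis
        by (rule rc_cong) (auto simp: length_Suc_conv numeral_2_eq_2 numeral_3_eq_3 eval_nat_numeral)
    qed
    have "rc A (Suc (Suc l')) (\<lambda>ys. rec_nat (evc f (hd ys) (drop 2 ys)) (\<lambda>k r. if r = 0 then 0 else evc g (hd ys) (k # (r - 1) # drop 2 ys)) (ys ! 1))"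
      apply (rule rc_rec_nat)
        apply (rule z)
       apply (rule rc_proj, simp)
      apply (rule gg')
      done
    then show ?thesis unfolding Suc
      by (rule rc_cong) (clarsimp simp: length_Suc_conv, simp only: list.sel drop_Suc_Cons numeral_2_eq_2 drop_0 evc.simps)
  qed
next
  case (Mu f)
  have ww: "rc A (Suc (Suc (Suc l))) (\<lambda>ws. evc f (ws ! 2) (ws ! 0 # drop 3 ws))"
    using rc_drop2[OF Mu.IH[of "Suc l"] rc_proj[of 2 "Suc (Suc (Suc l))" A] rc_proj[of 0 "Suc (Suc (Suc l))" A], where j=3] by simp
  have ww': "rc A (Suc (Suc (Suc l))) (\<lambda>ws. if ws ! 1 \<noteq> 0 then ws ! 1 else if evc f (hd (tl (tl ws))) (ws ! 0 # tl (tl (tl ws))) = 0 then 1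
        else if evc f (hd (tl (tl ws))) (ws ! 0 # tl (tl (tl ws))) = 1 then Suc (Suc (ws ! 0)) else 0)"
  proof -
    have "rc A (Suc (Suc (Suc l))) (\<lambda>ws. if ws ! 1 \<noteq> 0 then ws ! 1 else if evc f (ws ! 2) (ws ! 0 # drop 3 ws) = 0 then 1
        else if evc f (ws ! 2) (ws ! 0 # drop 3 ws) = 1 then Suc (Suc (ws ! 0)) else 0)"
      by (intro rci ww) auto
    then show ?thesis
      by (rule rc_cong) (auto simp: length_Suc_conv numeral_2_eq_2 numeral_3_eq_3)
  qed
  have "rc A (Suc l) (\<lambda>ys. rec_nat 0 (\<lambda>k st. if st \<noteq> 0 then st else if evc f (hd ys) (k # tl ys) = 0 then 1
        else if evc f (hd ys) (k # tl ys) = 1 then Suc (Suc k) else 0) (hd ys))"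
    apply (rule rc_rec_nat)
      apply (rule rc_const)
     apply (rule rc_hd)
    apply (rule ww')
    done
  then have "rc A (Suc l) (\<lambda>ys. msr (\<lambda>k. evc f (hd ys) (k # tl ys)) (hd ys))"
    by (simp add: msr_rec)
  then have "rc A (Suc l) (\<lambda>ys. if 2 \<le> msr (\<lambda>k. evc f (hd ys) (k # tl ys)) (hd ys) then msr (\<lambda>k. evc f (hd ys) (k # tl ys)) (hd ys) - 1 else 0)"
    by (intro rci)
  then show ?case by simp
qed



lemma rf_num_inj: "rf_num p = rf_num q \<Longrightarrow> p = q"
proof (induction p arbitrary: q)
  case (Comp f gs)
  from Comp.prems obtain f' gs' where q: "q = Comp f' gs'" by (cases q) auto
  with Comp.prems have 1: "rf_num f = rf_num f'" and 2: "map rf_num gs = map rf_num gs'"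
    by (auto simp: list_encode_eq)
  have "gs = gs'" using 2 Comp.IH(2)
  proof (induction gs arbitrary: gs')
    case Nil then show ?case by simp
  next
    case (Cons g gs)
    then obtain g' gs0 where "gs' = g' # gs0" by (cases gs') auto
    with Cons show ?case by auto
  qed
  with 1 Comp.IH(1) q show ?case by simp
next
  case (PrimRec f g)
  then show ?case by (cases q) auto
next
  case (Mu f)
  then show ?case by (cases q) auto
qed (case_tac q; auto)+

lemma rf_num_inv_mu: "rf_num p = prod_encode (5, x) \<Longrightarrow> \<exists>f. p = Mu f \<and> rf_num f = x"
  by (cases p) auto

lemma rf_num_inv_comp: "rf_num p = prod_encode (3, prod_encode (x, list_encode ys)) \<Longrightarrow>
   \<exists>f gs. p = Comp f gs \<and> rf_num f = x \<and> map rf_num gs = ys"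
  by (cases p) (auto simp: list_encode_eq)

lemma halting_set_iff: "rf_num p \<in> halting_set \<longleftrightarrow> (\<exists>y. eval {} p [rf_num p] y)"
  unfolding halting_set_def using rf_num_inj by blast

definition condc :: "nat \<Rightarrow> nat \<Rightarrow> bool" where
  "condc m r = ((\<forall>i<lenc (fst (prod_decode m)). nthc (fst (prod_decode m)) i \<le> 1) \<and>
      lenc r \<le> lenc (fst (prod_decode m)) \<and> (\<forall>i<lenc r. nthc r i = nthc (fst (prod_decode m)) i))"

definition Fh :: "nat \<Rightarrow> nat \<Rightarrow> nat \<Rightarrow> nat" where
  "Fh m r v = (if condc m r \<and> v \<noteq> 0 then 0 else 1)"

lemma rc_condc[rci]: "rc A n a \<Longrightarrow> rc A n b \<Longrightarrow> rcB A n (\<lambda>xs. condc (a xs) (b xs))"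
  unfolding condc_def by (intro rci rc_tl_arg) (simp_all)

lemma ex_pF: "\<exists>p. \<forall>xs. length xs = 3 \<longrightarrow> eval {} p xs (Fh (xs ! 0) (xs ! 1) (xs ! 2))"
proof -
  have "rc {} 3 (\<lambda>xs. Fh (xs ! 0) (xs ! 1) (xs ! 2))" unfolding Fh_def by (intro rci) auto
  then show ?thesis by (simp add: rc_def)
qed

lemma ex_pT: "\<exists>p. \<forall>xs. length xs = 2 \<longrightarrow> eval {} p xs (snd (prod_decode (xs ! 0)))"
proof -
  have "rc {} 2 (\<lambda>xs. snd (prod_decode (xs ! 0)))" by (intro rci) auto
  then show ?thesis by (simp add: rc_def)
qed

lemma ex_pC: "\<exists>p. \<forall>xs. length xs = 2 \<longrightarrow> eval {} p xs (fst (prod_decode (xs ! 0)))"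
proof -
  have "rc {} 2 (\<lambda>xs. fst (prod_decode (xs ! 0)))" by (intro rci) auto
  then show ?thesis by (simp add: rc_def)
qed

definition pF where "pF = (SOME p. \<forall>xs. length xs = 3 \<longrightarrow> eval {} p xs (Fh (xs ! 0) (xs ! 1) (xs ! 2)))"
definition pT where "pT = (SOME p. \<forall>xs. length xs = 2 \<longrightarrow> eval {} p xs (snd (prod_decode (xs ! 0))))"
definition pC where "pC = (SOME p. \<forall>xs. length xs = 2 \<longrightarrow> eval {} p xs (fst (prod_decode (xs ! 0))))"

lemma pF: "length xs = 3 \<Longrightarrow> eval {} pF xs (Fh (xs ! 0) (xs ! 1) (xs ! 2))"
  using someI_ex[OF ex_pF] unfolding pF_def by blast
lemma pT: "length xs = 2 \<Longrightarrow> eval {} pT xs (snd (prod_decode (xs ! 0)))"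
  using someI_ex[OF ex_pT] unfolding pT_def by blast
lemma pC: "length xs = 2 \<Longrightarrow> eval {} pC xs (fst (prod_decode (xs ! 0)))"
  using someI_ex[OF ex_pC] unfolding pC_def by blast

definition HB :: "rf \<Rightarrow> rf" where "HB r = Comp pF [Proj 0, Proj 1, Comp r [pT, pC]]"
definition Jp :: "rf \<Rightarrow> nat \<Rightarrow> rf" where "Jp r c = Mu (Comp (HB r) [Proj 0, kprog c])"
definition Hp :: "rf \<Rightarrow> nat \<Rightarrow> nat \<Rightarrow> rf" where "Hp r c m = Mu (Comp (HB r) [kprog m, kprog c])"

lemma list_all2_3: "list_all2 P [a, b, c] ys \<longleftrightarrow> (\<exists>x y z. ys = [x, y, z] \<and> P a x \<and> P b y \<and> P c z)"
  by (auto simp: list_all2_Cons1)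

lemma list_all2_2: "list_all2 P [a, b] ys \<longleftrightarrow> (\<exists>x y. ys = [x, y] \<and> P a x \<and> P b y)"
  by (auto simp: list_all2_Cons1)

lemma eval_Proj: "eval A (Proj i) xs y \<longleftrightarrow> y = (if i < length xs then xs ! i else 0)"
  using eval.proj[of A i xs] by (auto elim: evalProjE)

lemma eval_kprog_iff: "eval A (kprog c) xs y \<longleftrightarrow> y = c"
  using eval_kprog eval_det by blast

lemma eval_HB: "eval {} (HB r) [m, c] y \<longleftrightarrow>
    (\<exists>v. eval {} r [snd (prod_decode m), fst (prod_decode m)] v \<and> y = Fh m c v)"
proof
  assume "eval {} (HB r) [m, c] y"
  then obtain ys where l: "list_all2 (\<lambda>g y. eval {} g [m, c] y) [Proj 0, Proj 1, Comp r [pT, pC]] ys"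
    and f: "eval {} pF ys y" unfolding HB_def by (auto elim: evalCompE)
  from l obtain v where ys: "ys = [m, c, v]" and rv: "eval {} (Comp r [pT, pC]) [m, c] v"
    by (auto simp: list_all2_3 eval_Proj)
  from rv obtain zs where l2: "list_all2 (\<lambda>g y. eval {} g [m, c] y) [pT, pC] zs" and r: "eval {} r zs v"
    by (auto elim: evalCompE)
  from l2 have "zs = [snd (prod_decode m), fst (prod_decode m)]"
    using pT[of "[m, c]"] pC[of "[m, c]"] eval_det by (auto simp: list_all2_2)
  with r have 1: "eval {} r [snd (prod_decode m), fst (prod_decode m)] v" by simp
  have "y = Fh m c v" using f pF[of "[m, c, v]"] ys eval_det by auto
  with 1 show "\<exists>v. eval {} r [snd (prod_decode m), fst (prod_decode m)] v \<and> y = Fh m c v" by blast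
next
  assume "\<exists>v. eval {} r [snd (prod_decode m), fst (prod_decode m)] v \<and> y = Fh m c v"
  then obtain v where r: "eval {} r [snd (prod_decode m), fst (prod_decode m)] v" and y: "y = Fh m c v" by blast
  have "eval {} (Comp r [pT, pC]) [m, c] v"
    by (rule eval.comp[OF _ r]) (use pT[of "[m, c]"] pC[of "[m, c]"] in \<open>auto simp: list_all2_2\<close>)
  then have "list_all2 (\<lambda>g y. eval {} g [m, c] y) [Proj 0, Proj 1, Comp r [pT, pC]] [m, c, v]"
    by (auto simp: list_all2_3 eval_Proj)
  moreover have "eval {} pF [m, c, v] y" using pF[of "[m, c, v]"] y by simp
  ultimately show "eval {} (HB r) [m, c] y" unfolding HB_def by (rule eval.comp)
qed

lemma eval_Jp: "eval {} (Jp r c) [e] n \<longleftrightarrow>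
   (eval {} (HB r) [n, c] 0 \<and> (\<forall>m<n. \<exists>y. y \<noteq> 0 \<and> eval {} (HB r) [m, c] y))"
proof -
  have C: "eval {} (Comp (HB r) [Proj 0, kprog c]) [m, e] y \<longleftrightarrow> eval {} (HB r) [m, c] y" for m y
  proof
    assume "eval {} (Comp (HB r) [Proj 0, kprog c]) [m, e] y"
    then show "eval {} (HB r) [m, c] y"
      by (auto elim!: evalCompE simp: list_all2_2 eval_Proj eval_kprog_iff)
  next
    assume "eval {} (HB r) [m, c] y"
    then show "eval {} (Comp (HB r) [Proj 0, kprog c]) [m, e] y"
      by (intro eval.comp[where ys="[m, c]"]) (auto simp: list_all2_2 eval_Proj eval_kprog_iff)
  qed
  show ?thesis unfolding Jp_def
  proof
    assume "eval {} (Mu (Comp (HB r) [Proj 0, kprog c])) [e] n"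
    then show "eval {} (HB r) [n, c] 0 \<and> (\<forall>m<n. \<exists>y. y \<noteq> 0 \<and> eval {} (HB r) [m, c] y)"
      by (rule evalMuE) (simp add: C)
  next
    assume "eval {} (HB r) [n, c] 0 \<and> (\<forall>m<n. \<exists>y. y \<noteq> 0 \<and> eval {} (HB r) [m, c] y)"
    then show "eval {} (Mu (Comp (HB r) [Proj 0, kprog c])) [e] n"
      by (intro eval.mu) (simp_all add: C)
  qed
qed

lemma eval_Hp: "(\<exists>y. eval {} (Hp r c m) [e] y) \<longleftrightarrow> eval {} (HB r) [m, c] 0"
proof -
  have C: "eval {} (Comp (HB r) [kprog m, kprog c]) [x, e] y \<longleftrightarrow> eval {} (HB r) [m, c] y" for x y
  proof
    assume "eval {} (Comp (HB r) [kprog m, kprog c]) [x, e] y"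
    then show "eval {} (HB r) [m, c] y"
      by (auto elim!: evalCompE simp: list_all2_2 eval_kprog_iff)
  next
    assume "eval {} (HB r) [m, c] y"
    then show "eval {} (Comp (HB r) [kprog m, kprog c]) [x, e] y"
      by (intro eval.comp[where ys="[m, c]"]) (auto simp: list_all2_2 eval_kprog_iff)
  qed
  show ?thesis
  proof
    assume "\<exists>y. eval {} (Hp r c m) [e] y"
    then obtain y where "eval {} (Hp r c m) [e] y" by blast
    then show "eval {} (HB r) [m, c] 0"
      unfolding Hp_def by (rule evalMuE) (simp add: C)
  next
    assume "eval {} (HB r) [m, c] 0"
    then have "eval {} (Hp r c m) [e] 0" unfolding Hp_def by (intro eval.mu) (simp_all add: C)
    then show "\<exists>y. eval {} (Hp r c m) [e] y" by blast
  qed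
qed

definition kcode :: "nat \<Rightarrow> nat" where "kcode c = rf_num (kprog c)"

lemma kcode_rec: "kcode c = rec_nat 0 (\<lambda>k r. prod_encode (3, prod_encode (prod_encode (1, 0), Suc (prod_encode (r, 0))))) c"
  by (induction c) (auto simp: kcode_def prod_encode_def)

lemma rc_kcode[rci]: "rc A n a \<Longrightarrow> rc A n (\<lambda>xs. kcode (a xs))"
proof -
  assume a: "rc A n a"
  have "rc A n (\<lambda>xs. rec_nat 0 (\<lambda>k r. prod_encode (3, prod_encode (prod_encode (1, 0), Suc (prod_encode (r, 0))))) (a xs))"
    by (intro rci a) auto
  then show ?thesis by (simp add: kcode_rec)
qed

definition hbcode :: "nat \<Rightarrow> nat" where
  "hbcode s = prod_encode (3, prod_encode (rf_num pF, list_encode [rf_num (Proj 0), rf_num (Proj 1),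
      prod_encode (3, prod_encode (s, list_encode [rf_num pT, rf_num pC]))]))"

definition jcode :: "nat \<Rightarrow> nat \<Rightarrow> nat" where
  "jcode s c = prod_encode (5, prod_encode (3, prod_encode (hbcode s, list_encode [rf_num (Proj 0), kcode c])))"

definition hcode :: "nat \<Rightarrow> nat \<Rightarrow> nat \<Rightarrow> nat" where
  "hcode s c m = prod_encode (5, prod_encode (3, prod_encode (hbcode s, list_encode [kcode m, kcode c])))"

lemma hbcode_num: "hbcode (rf_num r) = rf_num (HB r)"
  by (simp add: hbcode_def HB_def)
lemma jcode_num: "jcode (rf_num r) c = rf_num (Jp r c)"
  by (simp add: jcode_def Jp_def hbcode_num kcode_def)
lemma hcode_num: "hcode (rf_num r) c m = rf_num (Hp r c m)"
  by (simp add: hcode_def Hp_def hbcode_num kcode_def)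

lemma rc_hbcode[rci]: "rc A n a \<Longrightarrow> rc A n (\<lambda>xs. hbcode (a xs))"
  unfolding hbcode_def list_encode.simps by (intro rci)
lemma rc_jcode[rci]: "rc A n a \<Longrightarrow> rc A n b \<Longrightarrow> rc A n (\<lambda>xs. jcode (a xs) (b xs))"
  unfolding jcode_def list_encode.simps by (intro rci)
lemma rc_hcode[rci]: "rc A n a \<Longrightarrow> rc A n b \<Longrightarrow> rc A n d \<Longrightarrow> rc A n (\<lambda>xs. hcode (a xs) (b xs) (d xs))"
  unfolding hcode_def list_encode.simps by (intro rci)

lemma hbcode_inv: "rf_num f = hbcode s \<Longrightarrow> \<exists>r. rf_num r = s \<and> f = HB r"
proof -
  assume "rf_num f = hbcode s"
  then obtain f2 gs2 where "f = Comp f2 gs2" and m: "map rf_num gs2 = [rf_num (Proj 0), rf_num (Proj 1),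
      prod_encode (3, prod_encode (s, list_encode [rf_num pT, rf_num pC]))]"
    unfolding hbcode_def by (blast dest: rf_num_inv_comp)
  then obtain g3 where "rf_num g3 = prod_encode (3, prod_encode (s, list_encode [rf_num pT, rf_num pC]))"
    by (auto simp: map_eq_Cons_conv)
  then obtain r where "rf_num r = s" by (blast dest: rf_num_inv_comp)
  moreover have "f = HB r" using \<open>rf_num f = hbcode s\<close> hbcode_num[of r] \<open>rf_num r = s\<close> rf_num_inj by simp
  ultimately show ?thesis by blast
qed

lemma jcode_inv: "rf_num p = jcode s c \<Longrightarrow> \<exists>r. rf_num r = s \<and> p = Jp r c"
proof -
  assume a: "rf_num p = jcode s c"
  then obtain f where "p = Mu f" "rf_num f = prod_encode (3, prod_encode (hbcode s, list_encode [rf_num (Proj 0), kcode c]))"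
    unfolding jcode_def by (blast dest: rf_num_inv_mu)
  then obtain f1 gs where "rf_num f1 = hbcode s" by (blast dest: rf_num_inv_comp)
  then obtain r where "rf_num r = s" by (blast dest: hbcode_inv)
  moreover then have "p = Jp r c" using a jcode_num[of r c] rf_num_inj by simp
  ultimately show ?thesis by blast
qed

lemma hcode_inv: "rf_num p = hcode s c m \<Longrightarrow> \<exists>r. rf_num r = s \<and> p = Hp r c m"
proof -
  assume a: "rf_num p = hcode s c m"
  then obtain f where "p = Mu f" "rf_num f = prod_encode (3, prod_encode (hbcode s, list_encode [kcode m, kcode c]))"
    unfolding hcode_def by (blast dest: rf_num_inv_mu)
  then obtain f1 gs where "rf_num f1 = hbcode s" by (blast dest: rf_num_inv_comp)
  then obtain r where "rf_num r = s" by (blast dest: hbcode_inv)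
  moreover then have "p = Hp r c m" using a hcode_num[of r c m] rf_num_inj by simp
  ultimately show ?thesis by blast
qed

lemma jcode_halt: "jcode s c \<in> halting_set \<longleftrightarrow> (\<exists>r. rf_num r = s \<and> (\<exists>n. eval {} (Jp r c) [jcode s c] n))"
proof
  assume "jcode s c \<in> halting_set"
  then obtain p y where p: "rf_num p = jcode s c" "eval {} p [jcode s c] y" unfolding halting_set_def by blast
  from jcode_inv[OF p(1)] obtain r where "rf_num r = s" "p = Jp r c" by blast
  with p show "\<exists>r. rf_num r = s \<and> (\<exists>n. eval {} (Jp r c) [jcode s c] n)" by blast
next
  assume "\<exists>r. rf_num r = s \<and> (\<exists>n. eval {} (Jp r c) [jcode s c] n)"
  then obtain r n where "rf_num r = s" "eval {} (Jp r c) [jcode s c] n" by blast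
  then show "jcode s c \<in> halting_set" unfolding halting_set_def using jcode_num[of r c] by auto
qed

lemma hcode_halt: "hcode s c m \<in> halting_set \<longleftrightarrow> (\<exists>r. rf_num r = s \<and> eval {} (HB r) [m, c] 0)"
proof
  assume "hcode s c m \<in> halting_set"
  then obtain p y where p: "rf_num p = hcode s c m" "eval {} p [hcode s c m] y" unfolding halting_set_def by blast
  from hcode_inv[OF p(1)] obtain r where "rf_num r = s" "p = Hp r c m" by blast
  with p eval_Hp show "\<exists>r. rf_num r = s \<and> eval {} (HB r) [m, c] 0" by blast
next
  assume "\<exists>r. rf_num r = s \<and> eval {} (HB r) [m, c] 0"
  then obtain r where r: "rf_num r = s" "eval {} (HB r) [m, c] 0" by blast
  then obtain y where "eval {} (Hp r c m) [hcode s c m] y" using eval_Hp by blast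
  then show "hcode s c m \<in> halting_set" unfolding halting_set_def using hcode_num[of r c m] r(1) by auto
qed



section \<open>The construction\<close>

definition extc :: "nat \<Rightarrow> nat \<Rightarrow> nat" where
  "extc c k = list_encode (map (\<lambda>i. if i < lenc c then nthc c i else 1) [0..<lenc c + k])"

definition Qc :: "nat set \<Rightarrow> nat \<Rightarrow> nat \<Rightarrow> bool" where
  "Qc A s r = (Suc (2 * jcode s r) \<in> A)"

definition Hqc :: "nat set \<Rightarrow> nat \<Rightarrow> nat \<Rightarrow> nat \<Rightarrow> bool" where
  "Hqc A s r m = (Suc (2 * hcode s r m) \<in> A)"

definition mfind :: "nat set \<Rightarrow> nat \<Rightarrow> nat \<Rightarrow> nat" where
  "mfind A s r = (LEAST m. \<not> Qc A s r \<or> Hqc A s r m)"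

definition tauc :: "nat set \<Rightarrow> nat \<Rightarrow> nat \<Rightarrow> nat" where
  "tauc A s r = fst (prod_decode (mfind A s r))"

definition respc :: "nat set \<Rightarrow> nat \<Rightarrow> bool" where
  "respc A c = (\<forall>i<lenc c. 2 * i \<in> A \<longrightarrow> nthc c i = 1)"

definition kfind :: "nat set \<Rightarrow> nat \<Rightarrow> nat \<Rightarrow> nat" where
  "kfind A s c = (LEAST k. \<not> respc A c \<or> \<not> Qc A s (extc c k) \<or> respc A (tauc A s (extc c k)))"

definition stepc :: "nat set \<Rightarrow> nat \<Rightarrow> nat \<Rightarrow> nat" where
  "stepc A s c = extc (if Qc A s (extc c (kfind A s c)) then tauc A s (extc c (kfind A s c)) else extc c (kfind A s c)) 1"

definition sigc :: "nat set \<Rightarrow> nat \<Rightarrow> nat" where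
  "sigc A s = rec_nat 0 (\<lambda>s c. stepc A s c) s"

definition Gset :: "nat set \<Rightarrow> nat set" where
  "Gset A = {n. nthc (sigc A (Suc n)) n = 1}"

lemma rc_extc[rci]: "rc B n a \<Longrightarrow> rc B n b \<Longrightarrow> rc B n (\<lambda>xs. extc (a xs) (b xs))"
proof -
  assume a: "rc B n a" and b: "rc B n b"
  have "rc B (Suc n) (\<lambda>ws. if hd ws < lenc (a (tl ws)) then nthc (a (tl ws)) (hd ws) else 1)"
    by (intro rci rc_tl_arg a)
  then show ?thesis unfolding extc_def
    by (rule rc_build) (intro rci a b)
qed

lemma rc_Qc[rci]: "rc A n a \<Longrightarrow> rc A n b \<Longrightarrow> rcB A n (\<lambda>xs. Qc A (a xs) (b xs))"
  unfolding Qc_def by (intro rci)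

lemma rc_Hqc[rci]: "rc A n a \<Longrightarrow> rc A n b \<Longrightarrow> rc A n d \<Longrightarrow> rcB A n (\<lambda>xs. Hqc A (a xs) (b xs) (d xs))"
  unfolding Hqc_def by (intro rci)

lemma rc_respc[rci]: "rc A n a \<Longrightarrow> rcB A n (\<lambda>xs. respc A (a xs))"
  unfolding respc_def by (intro rci rc_tl_arg) simp_all

lemma rc_mfind[rci]:
  assumes E1: "\<And>s r. \<exists>m. \<not> Qc A s r \<or> Hqc A s r m"
  shows "rc A n a \<Longrightarrow> rc A n b \<Longrightarrow> rc A n (\<lambda>xs. mfind A (a xs) (b xs))"
  unfolding mfind_def by (intro rci rc_tl_arg E1) simp_all

lemma rc_tauc[rci]:
  assumes E1: "\<And>s r. \<exists>m. \<not> Qc A s r \<or> Hqc A s r m"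
  shows "rc A n a \<Longrightarrow> rc A n b \<Longrightarrow> rc A n (\<lambda>xs. tauc A (a xs) (b xs))"
  unfolding tauc_def by (intro rci rc_mfind[OF E1])

lemma rc_kfind[rci]:
  assumes E1: "\<And>s r. \<exists>m. \<not> Qc A s r \<or> Hqc A s r m"
    and E2: "\<And>s c. \<exists>k. \<not> respc A c \<or> \<not> Qc A s (extc c k) \<or> respc A (tauc A s (extc c k))"
  shows "rc A n a \<Longrightarrow> rc A n b \<Longrightarrow> rc A n (\<lambda>xs. kfind A (a xs) (b xs))"
  unfolding kfind_def by (intro rci rc_tl_arg rc_tauc[OF E1] E2) simp_all

lemma rc_Gset:
  assumes E1: "\<And>s r. \<exists>m. \<not> Qc A s r \<or> Hqc A s r m"
    and E2: "\<And>s c. \<exists>k. \<not> respc A c \<or> \<not> Qc A s (extc c k) \<or> respc A (tauc A s (extc c k))"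
  shows "rc A 1 (\<lambda>xs. if xs ! 0 \<in> Gset A then 1 else 0)"
proof -
  have st: "rc A (Suc (Suc 1)) (\<lambda>ws. stepc A (ws ! 0) (ws ! 1))"
    unfolding stepc_def by (intro rci rc_kfind[OF E1 E2] rc_tauc[OF E1]) simp_all
  have "rc A 1 (\<lambda>xs. if nthc (rec_nat 0 (\<lambda>s c. stepc A s c) (Suc (xs ! 0))) (xs ! 0) = 1 then 1 else 0)"
    by (intro rci st) simp_all
  then show ?thesis unfolding Gset_def sigc_def by simp
qed



lemma lenc_extc: "lenc (extc c k) = lenc c + k"
  by (simp add: extc_def lenc_enc)

lemma nthc_extc: "j < lenc c + k \<Longrightarrow> nthc (extc c k) j = (if j < lenc c then nthc c j else 1)"
  by (simp add: extc_def nthc_enc)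

lemma code_rebuild: "list_encode (map (nthc c) [0..<lenc c]) = c"
proof -
  obtain L where c: "c = list_encode L" by (metis list_decode_inverse)
  have "map (nthc c) [0..<lenc c] = L" unfolding c lenc_enc
    by (rule nth_equalityI) (auto simp: nthc_enc)
  then show ?thesis using c by simp
qed

definition pre :: "nat \<Rightarrow> nat \<Rightarrow> bool" where
  "pre c d \<longleftrightarrow> lenc c \<le> lenc d \<and> (\<forall>j<lenc c. nthc c j = nthc d j)"

lemma pre_refl: "pre c c" by (simp add: pre_def)

lemma pre_trans: "pre a b \<Longrightarrow> pre b c \<Longrightarrow> pre a c"
  unfolding pre_def by (metis order_trans less_le_trans)

lemma pre_extc: "pre c (extc c k)"
  by (simp add: pre_def lenc_extc nthc_extc)

definition validc :: "nat \<Rightarrow> bool" where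
  "validc c \<longleftrightarrow> (\<forall>j<lenc c. nthc c j \<le> 1)"

lemma validc_extc: "validc c \<Longrightarrow> validc (extc c k)"
  by (auto simp: validc_def lenc_extc nthc_extc)

lemma condc_iff: "condc m r \<longleftrightarrow> validc (fst (prod_decode m)) \<and> pre r (fst (prod_decode m))"
  by (simp add: condc_def validc_def pre_def)

lemma join_odd: "Suc (2 * x) \<in> join Z H \<longleftrightarrow> x \<in> H"
  unfolding join_def by auto presburger+

lemma join_even: "2 * x \<in> join Z H \<longleftrightarrow> x \<in> Z"
  unfolding join_def by auto presburger+

lemma Qc_iff: "Qc (join Z halting_set) s r \<longleftrightarrow> jcode s r \<in> halting_set"
  by (simp add: Qc_def join_odd)

lemma Hqc_iff: "Hqc (join Z halting_set) s r m \<longleftrightarrow> hcode s r m \<in> halting_set"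
  by (simp add: Hqc_def join_odd)

lemma respc_iff: "respc (join Z H) c \<longleftrightarrow> (\<forall>i<lenc c. i \<in> Z \<longrightarrow> nthc c i = 1)"
  by (simp add: respc_def join_even)

section \<open>Existence of the searched objects\<close>

lemma E1: "\<exists>m. \<not> Qc (join Z halting_set) s r \<or> Hqc (join Z halting_set) s r m"
proof (cases "Qc (join Z halting_set) s r")
  case True
  then obtain R n where R: "rf_num R = s" "eval {} (Jp R r) [jcode s r] n"
    by (auto simp: Qc_iff jcode_halt)
  then have "eval {} (HB R) [n, r] 0" by (simp add: eval_Jp)
  with R(1) have "Hqc (join Z halting_set) s r n" by (auto simp: Hqc_iff hcode_halt)
  then show ?thesis by blast
qed blast

lemma Q_tau:
  assumes Q: "Qc (join Z halting_set) s r"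
  shows "\<exists>R. rf_num R = s \<and> condc (mfind (join Z halting_set) s r) r \<and>
     (\<exists>v. v \<noteq> 0 \<and> eval {} R [snd (prod_decode (mfind (join Z halting_set) s r)), fst (prod_decode (mfind (join Z halting_set) s r))] v)"
proof -
  let ?A = "join Z halting_set"
  let ?m = "mfind ?A s r"
  have "\<not> Qc ?A s r \<or> Hqc ?A s r ?m" unfolding mfind_def by (rule LeastI_ex) (rule E1)
  with Q have "Hqc ?A s r ?m" by simp
  then obtain R where R: "rf_num R = s" "eval {} (HB R) [?m, r] 0" by (auto simp: Hqc_iff hcode_halt)
  from R(2) obtain v where "eval {} R [snd (prod_decode ?m), fst (prod_decode ?m)] v" "Fh ?m r v = 0"
    unfolding eval_HB by auto
  then show ?thesis using R(1) by (auto simp: Fh_def split: if_splits)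
qed



lemma rc_max[rci]: "rc A n a \<Longrightarrow> rc A n b \<Longrightarrow> rc A n (\<lambda>xs. max (a xs) (b xs))"
proof -
  assume "rc A n a" "rc A n b"
  then have "rc A n (\<lambda>xs. if a xs \<le> b xs then b xs else a xs)" by (intro rci)
  then show ?thesis by (simp add: max_def)
qed

lemma rc_computable: "rc {} 1 (\<lambda>xs. f (xs ! 0)) \<Longrightarrow> computable f"
proof -
  assume "rc {} 1 (\<lambda>xs. f (xs ! 0))"
  then obtain p where p: "\<forall>xs. length xs = 1 \<longrightarrow> eval {} p xs (f (xs ! 0))" unfolding rc_def by blast
  have "eval {} p [n] (f n)" for n using p[rule_format, of "[n]"] by simp
  then show ?thesis unfolding computable_def computable_in_def by blast
qed

lemma computable_rc: "(\<forall>n. eval {} p [n] (f n)) \<Longrightarrow> rc {} 1 (\<lambda>xs. f (xs ! 0))"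
  unfolding rc_def by (intro exI[of _ p]) (auto simp: length_Suc_conv)

lemma E2:
  assumes hyp: "hyperimmune Z"
  shows "\<exists>k. \<not> respc (join Z halting_set) c \<or> \<not> Qc (join Z halting_set) s (extc c k)
      \<or> respc (join Z halting_set) (tauc (join Z halting_set) s (extc c k))"
proof (rule ccontr)
  let ?A = "join Z halting_set"
  assume "\<not> ?thesis"
  then have h: "\<forall>k. respc ?A c \<and> Qc ?A s (extc c k) \<and> \<not> respc ?A (tauc ?A s (extc c k))" by blast
  from h have "Qc ?A s (extc c 0)" by blast
  then obtain R0 where R0: "rf_num R0 = s" unfolding Qc_iff jcode_halt by blast
  have J: "\<exists>n. eval {} (Jp R0 (extc c k)) [jcode s (extc c k)] n" for k
  proof -
    from h have "Qc ?A s (extc c k)" by blast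
    then obtain R n where "rf_num R = s" "eval {} (Jp R (extc c k)) [jcode s (extc c k)] n"
      unfolding Qc_iff jcode_halt by blast
    with R0 rf_num_inj show ?thesis by metis
  qed
  have mf: "mfind ?A s r = n" if Q: "Qc ?A s r" and e: "eval {} (Jp R0 r) [x] n" for r n x
  proof -
    have Hq: "Hqc ?A s r m \<longleftrightarrow> eval {} (HB R0) [m, r] 0" for m
      using R0 rf_num_inj by (auto simp: Hqc_iff hcode_halt)
    from e have a: "eval {} (HB R0) [n, r] 0" and b: "\<forall>m<n. \<exists>y. y \<noteq> 0 \<and> eval {} (HB R0) [m, r] y"
      by (simp_all add: eval_Jp)
    show ?thesis unfolding mfind_def
    proof (rule Least_equality)
      show "\<not> Qc ?A s r \<or> Hqc ?A s r n" using a Hq by simp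
    next
      fix m assume "\<not> Qc ?A s r \<or> Hqc ?A s r m"
      with Q Hq have m0: "eval {} (HB R0) [m, r] 0" by simp
      show "n \<le> m"
      proof (rule ccontr)
        assume "\<not> n \<le> m"
        then have "m < n" by simp
        with b obtain y where "y \<noteq> 0" "eval {} (HB R0) [m, r] y" by blast
        with m0 eval_det show False by blast
      qed
    qed
  qed
  obtain pX where pX: "\<forall>xs. length xs = 1 \<longrightarrow> eval {} pX xs (extc c (xs ! 0))"
  proof -
    have "rc {} 1 (\<lambda>xs. extc c (xs ! 0))" by (intro rci) auto
    then show ?thesis using that unfolding rc_def by blast
  qed
  obtain pL where pL: "\<forall>xs. length xs = 1 \<longrightarrow> eval {} pL xs (lenc (fst (prod_decode (xs ! 0))))"
  proof -
    have "rc {} 1 (\<lambda>xs. lenc (fst (prod_decode (xs ! 0))))" by (intro rci) auto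
    then show ?thesis using that unfolding rc_def by blast
  qed
  let ?F = "Comp (HB R0) [Proj 0, Comp pX [Proj 1]]"
  have C: "eval {} ?F [m, k] y \<longleftrightarrow> eval {} (HB R0) [m, extc c k] y" for m k y
  proof -
    have X: "eval {} (Comp pX [Proj 1]) [m, k] z \<longleftrightarrow> z = extc c k" for z
    proof
      assume "eval {} (Comp pX [Proj 1]) [m, k] z"
      then obtain ys where "list_all2 (\<lambda>g y. eval {} g [m, k] y) [Proj 1] ys" "eval {} pX ys z"
        by (rule evalCompE) blast
      then show "z = extc c k" using pX[rule_format, of "[k]"] eval_det by (auto simp: list_all2_Cons1 eval_Proj)
    next
      assume "z = extc c k"
      then show "eval {} (Comp pX [Proj 1]) [m, k] z"
        by (intro eval.comp[where ys="[k]"]) (use pX[rule_format, of "[k]"] in \<open>auto simp: eval_Proj\<close>)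
    qed
    show ?thesis
    proof
      assume "eval {} ?F [m, k] y"
      then obtain ys where "list_all2 (\<lambda>g y. eval {} g [m, k] y) [Proj 0, Comp pX [Proj 1]] ys" "eval {} (HB R0) ys y"
        by (rule evalCompE) blast
      then show "eval {} (HB R0) [m, extc c k] y" by (auto simp: list_all2_2 eval_Proj X X[simplified])
    next
      assume "eval {} (HB R0) [m, extc c k] y"
      then show "eval {} ?F [m, k] y"
        by (intro eval.comp[where ys="[m, extc c k]"]) (auto simp: list_all2_2 eval_Proj X X[simplified])
    qed
  qed
  define gf where "gf k = lenc (tauc ?A s (extc c k))" for k
  have gprog: "eval {} (Comp pL [Mu ?F]) [k] (gf k)" for k
  proof -
    obtain n where n: "eval {} (Jp R0 (extc c k)) [jcode s (extc c k)] n" using J by blast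
    then have "eval {} (HB R0) [n, extc c k] 0 \<and> (\<forall>m<n. \<exists>y. y \<noteq> 0 \<and> eval {} (HB R0) [m, extc c k] y)"
      by (simp add: eval_Jp)
    then have "eval {} (Mu ?F) [k] n" by (intro eval.mu) (simp_all add: C C[simplified])
    moreover have "mfind ?A s (extc c k) = n" using mf[OF _ n] h by blast
    ultimately show ?thesis unfolding gf_def tauc_def
      by (intro eval.comp[where ys="[n]"]) (use pL[rule_format, of "[n]"] in auto)
  qed
  have rg: "rc {} 1 (\<lambda>xs. gf (xs ! 0))" using gprog by (rule computable_rc[rule_format])
  define fh where "fh i = rec_nat (lenc c) (\<lambda>i x. max (Suc x) (gf (x - lenc c))) i" for i
  have fhS: "fh (Suc i) = max (Suc (fh i)) (gf (fh i - lenc c))" for i by (simp add: fh_def)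
  have "rc {} 1 (\<lambda>xs. rec_nat (lenc c) (\<lambda>i x. max (Suc x) (gf (x - lenc c))) (xs ! 0))"
    by (intro rci rc_app1[OF rg]) auto
  then have "computable fh" unfolding fh_def by (intro rc_computable)
  moreover have "strict_mono fh" by (rule strict_mono_Suc_iff[THEN iffD2]) (simp add: fhS less_max_iff_disj)
  ultimately obtain i where i: "{fh i..<fh (Suc i)} \<inter> Z = {}" using hyp unfolding hyperimmune_def by blast
  have ge: "lenc c \<le> fh j" for j by (induction j) (auto simp: fh_def)
  define k where "k = fh i - lenc c"
  let ?r = "extc c k"
  have lr: "lenc ?r = fh i" using ge[of i] by (simp add: lenc_extc k_def)
  from h have Q: "Qc ?A s ?r" and nr: "\<not> respc ?A (tauc ?A s ?r)" and rc0: "respc ?A c" by auto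
  from Q_tau[OF Q] obtain R where "condc (mfind ?A s ?r) ?r" by blast
  then have pr: "pre ?r (tauc ?A s ?r)" by (simp add: condc_iff tauc_def)
  have lt: "lenc (tauc ?A s ?r) \<le> fh (Suc i)" using fhS[of i] by (simp add: gf_def k_def)
  have "respc ?A (tauc ?A s ?r)"
    unfolding respc_iff
  proof (intro allI impI)
    fix j assume j: "j < lenc (tauc ?A s ?r)" "j \<in> Z"
    show "nthc (tauc ?A s ?r) j = 1"
    proof (cases "j < fh i")
      case True
      then have "nthc (tauc ?A s ?r) j = nthc ?r j" using pr lr by (simp add: pre_def)
      also have "\<dots> = (if j < lenc c then nthc c j else 1)" using True lr by (simp add: nthc_extc lenc_extc)
      also have "\<dots> = 1" using rc0 j(2) by (auto simp: respc_iff)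
      finally show ?thesis .
    next
      case False
      then have "j \<in> {fh i..<fh (Suc i)}" using j(1) lt by simp
      with i j(2) show ?thesis by blast
    qed
  qed
  with nr show False by blast
qed



lemma respc_extc: "respc (join Z H) c \<Longrightarrow> respc (join Z H) (extc c k)"
  by (auto simp: respc_iff lenc_extc nthc_extc)

lemma lenc_0: "lenc 0 = 0"
  using lenc_enc[of "[]"] by simp

context
  fixes Z :: "nat set"
  assumes hyp: "hyperimmune Z"
begin

abbreviation "AZ \<equiv> join Z halting_set"

lemma kfind_prop: "\<not> respc AZ c \<or> \<not> Qc AZ s (extc c (kfind AZ s c)) \<or> respc AZ (tauc AZ s (extc c (kfind AZ s c)))"
  unfolding kfind_def by (rule LeastI_ex) (rule E2[OF hyp])

lemma step_props:
  assumes r: "respc AZ c" and v: "validc c"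
  shows "respc AZ (stepc AZ s c) \<and> validc (stepc AZ s c) \<and> pre c (stepc AZ s c) \<and> lenc c < lenc (stepc AZ s c)
     \<and> pre (extc c (kfind AZ s c)) (stepc AZ s c)"
proof -
  let ?r = "extc c (kfind AZ s c)"
  let ?P = "if Qc AZ s ?r then tauc AZ s ?r else ?r"
  have st: "stepc AZ s c = extc ?P 1" by (simp add: stepc_def)
  have rr: "respc AZ ?r" using r by (rule respc_extc)
  have vr: "validc ?r" using v by (rule validc_extc)
  have pr: "pre c ?r" by (rule pre_extc)
  have P: "respc AZ ?P \<and> validc ?P \<and> pre ?r ?P"
  proof (cases "Qc AZ s ?r")
    case True
    from Q_tau[OF True] obtain R where "condc (mfind AZ s ?r) ?r" by blast
    then have "validc (tauc AZ s ?r) \<and> pre ?r (tauc AZ s ?r)" by (simp add: condc_iff tauc_def)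
    moreover have "respc AZ (tauc AZ s ?r)" using kfind_prop[of c s] r True by blast
    ultimately show ?thesis using True by simp
  next
    case False
    then show ?thesis using rr vr pre_refl by simp
  qed
  have pe: "pre ?P (extc ?P 1)" by (rule pre_extc)
  have le: "lenc (extc ?P 1) = Suc (lenc ?P)" by (simp add: lenc_extc)
  have lc: "lenc c \<le> lenc ?P" using pr P by (auto simp: pre_def)
  have a1: "respc AZ (extc ?P 1)" using P by (intro respc_extc) simp
  have a2: "validc (extc ?P 1)" using P by (intro validc_extc) simp
  have a3: "pre ?r (extc ?P 1)" using pre_trans[of ?r ?P "extc ?P 1"] P pe by simp
  have a4: "pre c (extc ?P 1)" using pr a3 by (rule pre_trans)
  have a5: "lenc c < lenc (extc ?P 1)" using le lc by simp
  show ?thesis unfolding st using a1 a2 a3 a4 a5 by blast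
qed

lemma sig_props: "respc AZ (sigc AZ s) \<and> validc (sigc AZ s) \<and> s \<le> lenc (sigc AZ s)"
proof (induction s)
  case 0 then show ?case by (simp add: sigc_def respc_def validc_def lenc_0)
next
  case (Suc s)
  have e: "sigc AZ (Suc s) = stepc AZ s (sigc AZ s)" by (simp add: sigc_def)
  from Suc step_props[of "sigc AZ s" s] show ?case unfolding e by auto
qed

lemma sig_Suc: "sigc AZ (Suc s) = stepc AZ s (sigc AZ s)" by (simp add: sigc_def)

lemma sig_pre: "s \<le> s' \<Longrightarrow> pre (sigc AZ s) (sigc AZ s')"
proof (induction s' rule: dec_induct)
  case base then show ?case by (rule pre_refl)
next
  case (step n)
  then show ?case using step_props[of "sigc AZ n" n] sig_props[of n] pre_trans sig_Suc by metis
qed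

lemma G_bit: "i < lenc (sigc AZ s) \<Longrightarrow> (i \<in> Gset AZ \<longleftrightarrow> nthc (sigc AZ s) i = 1)"
proof -
  assume i: "i < lenc (sigc AZ s)"
  let ?M = "max s (Suc i)"
  have 1: "pre (sigc AZ s) (sigc AZ ?M)" by (rule sig_pre) simp
  have 2: "pre (sigc AZ (Suc i)) (sigc AZ ?M)" by (rule sig_pre) simp
  have "Suc i \<le> lenc (sigc AZ (Suc i))" using sig_props by blast
  then have "nthc (sigc AZ (Suc i)) i = nthc (sigc AZ ?M) i" using 2 by (simp add: pre_def)
  moreover have "nthc (sigc AZ s) i = nthc (sigc AZ ?M) i" using 1 i by (simp add: pre_def)
  ultimately show ?thesis by (simp add: Gset_def)
qed

lemma Z_sub_G: "Z \<subseteq> Gset AZ"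
proof
  fix i assume "i \<in> Z"
  have "Suc i \<le> lenc (sigc AZ (Suc i))" "respc AZ (sigc AZ (Suc i))" using sig_props by blast+
  with \<open>i \<in> Z\<close> have "nthc (sigc AZ (Suc i)) i = 1" by (auto simp: respc_iff)
  then show "i \<in> Gset AZ" by (simp add: Gset_def)
qed

lemma init_seg_code:
  assumes "validc c" "pre c (sigc AZ s)"
  shows "str_code (init_seg (Gset AZ) (lenc c)) = c"
proof -
  have "map (\<lambda>b. if b then 1 else 0) (init_seg (Gset AZ) (lenc c)) = map (nthc c) [0..<lenc c]"
  proof (rule nth_equalityI)
    fix j assume "j < length (map (\<lambda>b. if b then 1 else 0) (init_seg (Gset AZ) (lenc c)))"
    then have j: "j < lenc c" by (simp add: init_seg_def)
    then have jl: "j < lenc (sigc AZ s)" and eq: "nthc c j = nthc (sigc AZ s) j" using assms(2) by (auto simp: pre_def)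
    have "nthc c j \<le> 1" using assms(1) j by (simp add: validc_def)
    then show "map (\<lambda>b. if b then 1 else 0) (init_seg (Gset AZ) (lenc c)) ! j = map (nthc c) [0..<lenc c] ! j"
      using G_bit[OF jl] eq j by (auto simp: init_seg_def)
  qed (simp add: init_seg_def)
  then show ?thesis unfolding str_code_def using code_rebuild[of c] by simp
qed

lemma G_generic: "one_generic (Gset AZ)"
  unfolding one_generic_def
proof (intro allI impI)
  fix S assume "ce_strings S"
  then obtain p where pS: "\<And>\<sigma>. \<sigma> \<in> S \<longleftrightarrow> (\<exists>y. eval {} p [str_code \<sigma>] y)" unfolding ce_strings_def by blast
  obtain R where R: "\<forall>ys. length ys = Suc 1 \<longrightarrow> eval {} R ys (evc p (hd ys) (tl ys))"
    using evc_rc[of "{}" 1 p] unfolding rc_def by blast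
  have Rt: "eval {} R [t, x] (evc p t [x])" for t x using R[rule_format, of "[t, x]"] by simp
  let ?s = "rf_num R"
  let ?c = "sigc AZ ?s"
  let ?r = "extc ?c (kfind AZ ?s ?c)"
  have cr: "respc AZ ?c" "validc ?c" using sig_props by blast+
  have prS: "pre ?r (sigc AZ (Suc ?s))" using step_props[OF cr] sig_Suc by simp
  show "(\<exists>n. init_seg (Gset AZ) n \<in> S) \<or> (\<exists>n. \<forall>\<tau>\<in>S. \<not> (\<exists>\<rho>. \<tau> = init_seg (Gset AZ) n @ \<rho>))"
  proof (cases "Qc AZ ?s ?r")
    case True
    let ?m = "mfind AZ ?s ?r"
    let ?t = "tauc AZ ?s ?r"
    from Q_tau[OF True] obtain R' v where R': "rf_num R' = ?s" "condc ?m ?r" "v \<noteq> 0"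
      "eval {} R' [snd (prod_decode ?m), fst (prod_decode ?m)] v" by blast
    from R'(1) have "R' = R" by (rule rf_num_inj)
    with R'(4) Rt eval_det have "v = evc p (snd (prod_decode ?m)) [?t]" unfolding tauc_def by blast
    with R'(3) obtain y where "evc p (snd (prod_decode ?m)) [?t] = Suc y" using not0_implies_Suc by blast
    then have ev: "eval {} p [?t] y" by (rule evc_sound)
    have vt: "validc ?t" and prt: "pre ?r ?t" using R'(2) by (simp_all add: condc_iff tauc_def)
    have "sigc AZ (Suc ?s) = extc ?t 1" using True by (simp add: sig_Suc stepc_def)
    then have "pre ?t (sigc AZ (Suc ?s))" by (simp add: pre_extc)
    then have "str_code (init_seg (Gset AZ) (lenc ?t)) = ?t" using vt by (intro init_seg_code)
    then have "init_seg (Gset AZ) (lenc ?t) \<in> S" using pS ev by auto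
    then show ?thesis by blast
  next
    case False
    have vr: "validc ?r" using cr by (simp add: validc_extc)
    have "\<forall>\<tau>\<in>S. \<not> (\<exists>\<rho>. \<tau> = init_seg (Gset AZ) (lenc ?r) @ \<rho>)"
    proof (intro ballI notI)
      fix \<tau> assume "\<tau> \<in> S" and "\<exists>\<rho>. \<tau> = init_seg (Gset AZ) (lenc ?r) @ \<rho>"
      then obtain rest where tau: "\<tau> = init_seg (Gset AZ) (lenc ?r) @ rest" by blast
      from \<open>\<tau> \<in> S\<close> pS obtain y where "eval {} p [str_code \<tau>] y" by blast
      then obtain t where t: "evc p t [str_code \<tau>] = Suc y" using evc_complete by blast
      let ?x = "str_code \<tau>"
      let ?m0 = "prod_encode (?x, t)"
      have lx: "lenc ?x = length \<tau>" by (simp add: str_code_def lenc_enc)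
      have nx: "j < length \<tau> \<Longrightarrow> nthc ?x j = (if \<tau> ! j then 1 else 0)" for j
        by (simp add: str_code_def nthc_enc)
      have "condc ?m0 ?r" unfolding condc_iff prod_encode_inverse fst_conv
      proof
        show "validc ?x" by (auto simp: validc_def lx nx)
        show "pre ?r ?x" unfolding pre_def
        proof
          show "lenc ?r \<le> lenc ?x" unfolding lx using tau by (simp add: init_seg_def)
          show "\<forall>j<lenc ?r. nthc ?r j = nthc ?x j"
          proof (intro allI impI)
            fix j assume j: "j < lenc ?r"
            then have jt: "j < length \<tau>" using tau by (simp add: init_seg_def)
            have "\<tau> ! j = (j \<in> Gset AZ)" using tau j by (simp add: init_seg_def nth_append)
            moreover have jl: "j < lenc (sigc AZ (Suc ?s))" and "nthc ?r j = nthc (sigc AZ (Suc ?s)) j"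
              using prS j by (auto simp: pre_def)
            moreover have "nthc ?r j \<le> 1" using vr j by (simp add: validc_def)
            ultimately show "nthc ?r j = nthc ?x j" using G_bit[OF jl] nx[OF jt] by auto
          qed
        qed
      qed
      then have h0: "eval {} (HB R) [?m0, ?r] 0"
        unfolding eval_HB using Rt[of t ?x] t by (auto simp: Fh_def)
      have tot: "\<exists>y. eval {} (HB R) [m, ?r] y" for m unfolding eval_HB using Rt by blast
      let ?n = "LEAST m. eval {} (HB R) [m, ?r] 0"
      have "eval {} (HB R) [?n, ?r] 0" using h0 by (rule LeastI)
      moreover have "\<forall>m<?n. \<exists>y. y \<noteq> 0 \<and> eval {} (HB R) [m, ?r] y"
      proof (intro allI impI)
        fix m assume "m < ?n"
        then have "\<not> eval {} (HB R) [m, ?r] 0" by (rule not_less_Least)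
        with tot[of m] show "\<exists>y. y \<noteq> 0 \<and> eval {} (HB R) [m, ?r] y" by (metis)
      qed
      ultimately have "eval {} (Jp R ?r) [jcode ?s ?r] ?n" by (simp add: eval_Jp)
      then have "Qc AZ ?s ?r" unfolding Qc_iff jcode_halt by blast
      with False show False by blast
    qed
    then show ?thesis by blast
  qed
qed

end

theorem proposition4p7:
  fixes Z :: "nat set"
  assumes "hyperimmune Z"
  shows "\<exists>G. one_generic G \<and> turing_le G (join Z halting_set) \<and> Z \<subseteq> G"
proof (intro exI conjI)
  show "one_generic (Gset (join Z halting_set))" by (rule G_generic[OF assms])
  show "Z \<subseteq> Gset (join Z halting_set)" by (rule Z_sub_G[OF assms])
  have "rc (join Z halting_set) 1 (\<lambda>xs. if xs ! 0 \<in> Gset (join Z halting_set) then 1 else 0)"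
    by (rule rc_Gset) (rule E1, rule E2[OF assms])
  then obtain q where q: "\<forall>xs. length xs = 1 \<longrightarrow> eval (join Z halting_set) q xs (if xs ! 0 \<in> Gset (join Z halting_set) then 1 else 0)"
    unfolding rc_def by blast
  have "eval (join Z halting_set) q [n] (if n \<in> Gset (join Z halting_set) then 1 else 0)" for n
    using q[rule_format, of "[n]"] by simp
  then show "turing_le (Gset (join Z halting_set)) (join Z halting_set)" unfolding turing_le_def by blast
qed


end
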